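(* Let $f:U\to\mathbb{R}^3$ be a triply orthogonal system with Lamé coefficients $H_1,H_2,H_3$, and let $\varphi_1,\varphi_2,\varphi_3:U\to\mathbb{R}$ be functions such that, for each $m$, $\varphi_m$ defines Combescure transformations of the coordinate surfaces $x_m=\mathrm{const}$ in the following sense: writing $(m,p,q)$ for the cyclic permutation of $(1,2,3)$ starting with $m$, $\varphi_m$ satisfies $$\partial_{pq}\varphi_m+\partial_q\ln H_p\,\partial_p\varphi_m+\partial_p\ln H_q\,\partial_q\varphi_m+\varphi_m\,\partial_{pq}\ln(H_pH_q)=0,$$ and induces the Combescure transforms $d\hat f^m=h^m_p\partial_pf\,dx_p+h^m_q\partial_qf\,dx_q$ of the surfaces $x_m=\mathrm{const}$, where $$\partial_ph^m_p=\varphi_m\partial_p\ln(H_q\varphi_m),\qquad \partial_qh^m_p=-\varphi_m\partial_q\ln H_p,\qquad h^m_q=h^m_p-\varphi_m .$$ Then there exists a Combescure transformed triply orthogonal system $\hat f$ of $f$ such that the Combescure transformations between corresponding coordinate surfaces $x_m=\mathrm{const}$ of $f$ and $\hat f$ are induced (in this sense) by $\varphi_m$, for $m=1,2,3$, if and only if $$\varphi_1+\varphi_2+\varphi_3=0\quad\text{and}\quad \partial_j\varphi_j=\varphi_i\,\partial_j\ln H_k+\varphi_k\,\partial_j\ln H_i$$ for every cyclic permutation $(i,j,k)$ of $(1,2,3)$.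
   Context: $U\subset\mathbb{R}^3$ open connected, coordinates $(x_1,x_2,x_3)$, $\partial_i=\partial_{x_i}$, $\partial_{ij}=\partial_{x_i}\partial_{x_j}$. A triply orthogonal system is $f:U\to\mathbb{R}^3$ with $\det(\partial_1f,\partial_2f,\partial_3f)\ne0$ and $(\partial_if,\partial_jf)=0$ for $i\ne j$; its Lamé coefficients $H_i$ are defined by $\partial_if=H_iN_i$ with $N_i$ the unit normals of the coordinate surfaces $x_i=\mathrm{const}$. The coordinate surface $x_m=\mathrm{const}$ is parametrized by curvature line coordinates $(x_p,x_q)$ with metric $H_p^2dx_p^2+H_q^2dx_q^2$. A Combescure transform of $f$ is a triply orthogonal system $\hat f$ with $d\hat f=\sum_ih_i\partial_if\,dx_i$ whose coordinate surfaces are Combescure transforms of those of $f$ (equivalently, with the same rotational coefficients $\beta_{ij}=\frac1{H_i}\partial_iH_j$). The functions $h^m_p,h^m_q$ are determined by $\varphi_m$ up to a common additive constant on each coordinate surface. *)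

theory Defs
  imports "HOL-Analysis.Analysis"
begin

text \<open>Points of R^3 are vectors of type real^3; the coordinate indices 1,2,3 are the
elements of the numeral type 3 (arithmetic mod 3), so the cyclic permutation of (1,2,3)
starting with m is (m, m+1, m+2).\<close>

definition pd :: "3 \<Rightarrow> (real^3 \<Rightarrow> 'a::real_normed_vector) \<Rightarrow> real^3 \<Rightarrow> 'a" where
  "pd i g x = frechet_derivative g (at x) (axis i 1)"

fun Ck :: "nat \<Rightarrow> (real^3) set \<Rightarrow> (real^3 \<Rightarrow> 'a::real_normed_vector) \<Rightarrow> bool" where
  "Ck 0 U g = continuous_on U g"
| "Ck (Suc k) U g = (g differentiable_on U \<and> (\<forall>i. Ck k U (pd i g)))"

definition smooth_on3 :: "(real^3) set \<Rightarrow> (real^3 \<Rightarrow> 'a::real_normed_vector) \<Rightarrow> bool" where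
  "smooth_on3 U g = (\<forall>k. Ck k U g)"

definition triply_orthogonal :: "(real^3) set \<Rightarrow> (real^3 \<Rightarrow> real^3) \<Rightarrow> bool" where
  "triply_orthogonal U f =
     (smooth_on3 U f \<and>
      (\<forall>x\<in>U. det (\<chi> i. pd i f x) \<noteq> 0 \<and>
              (\<forall>i j. i \<noteq> j \<longrightarrow> inner (pd i f x) (pd j f x) = 0)))"

definition lame :: "(real^3 \<Rightarrow> real^3) \<Rightarrow> 3 \<Rightarrow> real^3 \<Rightarrow> real" where
  "lame f i x = norm (pd i f x)"

definition phi_equation :: "(real^3) set \<Rightarrow> (real^3 \<Rightarrow> real^3) \<Rightarrow> 3 \<Rightarrow> (real^3 \<Rightarrow> real) \<Rightarrow> bool" where
  "phi_equation U f m \<phi> =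
     (let p = m + 1; q = m + 2; H = lame f in
      \<forall>x\<in>U. pd p (pd q \<phi>) x
              + pd q (\<lambda>y. ln (H p y)) x * pd p \<phi> x
              + pd p (\<lambda>y. ln (H q y)) x * pd q \<phi> x
              + \<phi> x * pd p (pd q (\<lambda>y. ln (H p y * H q y))) x = 0)"

text \<open>fh is a Combescure transform of f on V (d fh = sum h_i d_i f dx_i), and for each m the
Combescure transformation of the coordinate surfaces x_m = const is induced by phi_m:
h_q = h_p - phi_m, d_p h_p = phi_m d_p ln(H_q phi_m) (written as
phi_m d_p ln H_q + d_p phi_m), d_q h_p = - phi_m d_q ln H_p.\<close>
definition combescure_induced ::
  "(real^3) set \<Rightarrow> (real^3 \<Rightarrow> real^3) \<Rightarrow> (3 \<Rightarrow> real^3 \<Rightarrow> real) \<Rightarrow> (real^3 \<Rightarrow> real^3) \<Rightarrow> bool" where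
  "combescure_induced V f \<phi> fh =
     (\<exists>h :: 3 \<Rightarrow> real^3 \<Rightarrow> real.
        (\<forall>i. \<forall>x\<in>V. pd i fh x = h i x *\<^sub>R pd i f x) \<and>
        (\<forall>m. let p = m + 1; q = m + 2; H = lame f in
           \<forall>x\<in>V. h q x = h p x - \<phi> m x
                \<and> pd p (h p) x = \<phi> m x * pd p (\<lambda>y. ln (H q y)) x + pd p (\<phi> m) x
                \<and> pd q (h p) x = - \<phi> m x * pd q (\<lambda>y. ln (H p y)) x))"

end

theory Submission
  imports Defs
begin


lemma pd_has: "(g has_derivative D) (at x) \<Longrightarrow> pd i g x = D (axis i 1)"
  unfolding pd_def by (metis frechet_derivative_at)

lemma pd_works: "g differentiable (at x) \<Longrightarrow> (g has_derivative frechet_derivative g (at x)) (at x)"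
  using frechet_derivative_works by blast

lemma pd_frechet: "frechet_derivative g (at x) (axis i 1) = pd i g x"
  unfolding pd_def by simp

lemma pd_cong:
  assumes "open S" "x \<in> S" "\<And>y. y \<in> S \<Longrightarrow> g y = g' y"
  shows "pd i g x = pd i g' x"
proof -
  have "\<And>D. (g has_derivative D) (at x) \<longleftrightarrow> (g' has_derivative D) (at x)"
    using has_derivative_transform_within_open[OF _ assms(1,2)] assms(3) by (metis)
  then show ?thesis unfolding pd_def frechet_derivative_def by simp
qed

lemma differentiable_cong_open:
  assumes "open S" "x \<in> S" "\<And>y. y \<in> S \<Longrightarrow> g y = g' y" "g differentiable (at x)"
  shows "g' differentiable (at x)"
  using assms has_derivative_transform_within_open unfolding differentiable_def by metis

lemma pd_add:
  assumes "f differentiable (at x)" "g differentiable (at x)"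
  shows "pd i (\<lambda>y. f y + g y) x = pd i f x + pd i g x"
  using pd_has[OF has_derivative_add[OF pd_works[OF assms(1)] pd_works[OF assms(2)]]]
  by (simp add: pd_frechet)

lemma pd_diff:
  assumes "f differentiable (at x)" "g differentiable (at x)"
  shows "pd i (\<lambda>y. f y - g y) x = pd i f x - pd i g x"
  using pd_has[OF has_derivative_diff[OF pd_works[OF assms(1)] pd_works[OF assms(2)]]]
  by (simp add: pd_frechet)

lemma pd_minus:
  assumes "f differentiable (at x)"
  shows "pd i (\<lambda>y. - f y) x = - pd i f x"
  using pd_has[OF has_derivative_minus[OF pd_works[OF assms(1)]]]
  by (simp add: pd_frechet)

lemma pd_const: "pd i (\<lambda>y. c::'a::real_normed_vector) x = 0"
  using pd_has[OF has_derivative_const[of c "at x"], where i=i] by simp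

lemma pd_bilinear:
  fixes f :: "real^3 \<Rightarrow> 'a::real_normed_vector" and g :: "real^3 \<Rightarrow> 'b::real_normed_vector"
    and prod :: "'a \<Rightarrow> 'b \<Rightarrow> 'c::real_normed_vector"
  assumes "bounded_bilinear prod" "f differentiable (at x)" "g differentiable (at x)"
  shows "pd i (\<lambda>y. prod (f y) (g y)) x = prod (pd i f x) (g x) + prod (f x) (pd i g x)"
  using pd_has[OF bounded_bilinear.FDERIV[OF assms(1) pd_works[OF assms(2)] pd_works[OF assms(3)]]]
  by (simp add: pd_frechet add.commute)

lemma pd_mult:
  fixes f g :: "real^3 \<Rightarrow> real"
  assumes "f differentiable (at x)" "g differentiable (at x)"
  shows "pd i (\<lambda>y. f y * g y) x = pd i f x * g x + f x * pd i g x"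
  using pd_bilinear[OF bounded_bilinear_mult assms] .

lemma pd_scaleR:
  fixes f :: "real^3 \<Rightarrow> real" and g :: "real^3 \<Rightarrow> 'a::real_normed_vector"
  assumes "f differentiable (at x)" "g differentiable (at x)"
  shows "pd i (\<lambda>y. f y *\<^sub>R g y) x = pd i f x *\<^sub>R g x + f x *\<^sub>R pd i g x"
  using pd_bilinear[OF bounded_bilinear_scaleR assms] .

lemma pd_inner:
  fixes f g :: "real^3 \<Rightarrow> 'a::real_inner"
  assumes "f differentiable (at x)" "g differentiable (at x)"
  shows "pd i (\<lambda>y. inner (f y) (g y)) x = inner (pd i f x) (g x) + inner (f x) (pd i g x)"
  using pd_bilinear[OF bounded_bilinear_inner assms] .

lemma pd_inverse:
  fixes g :: "real^3 \<Rightarrow> real"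
  assumes "g differentiable (at x)" "g x \<noteq> 0"
  shows "pd i (\<lambda>y. inverse (g y)) x = - (pd i g x * (inverse (g x) * inverse (g x)))"
  using pd_has[OF Deriv.has_derivative_inverse[OF assms(2) pd_works[OF assms(1)]]]
  by (simp add: pd_frechet algebra_simps)

lemma pd_ln:
  fixes g :: "real^3 \<Rightarrow> real"
  assumes "g differentiable (at x)" "g x > 0"
  shows "pd i (\<lambda>y. ln (g y)) x = pd i g x * inverse (g x)"
proof -
  have "((\<lambda>y. ln (g y)) has_derivative (\<lambda>h. frechet_derivative g (at x) h * inverse (g x))) (at x)"
    by (rule derivative_eq_intros pd_works assms refl | simp add: assms)+
  from pd_has[OF this] show ?thesis by (simp add: pd_frechet)
qed

lemma pd_axis_sum:
  "(\<Sum>k\<in>UNIV. (axis i (1::real)) $ k *\<^sub>R c k) = (c i :: 'a::real_vector)"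
proof -
  have "(\<Sum>k\<in>UNIV. (axis i (1::real)) $ k *\<^sub>R c k) = (\<Sum>k\<in>UNIV. if k = i then c k else 0)"
    by (intro sum.cong) (auto simp: axis_def)
  then show ?thesis by simp
qed

lemma vec_axis_expansion: "v = (\<Sum>k\<in>UNIV. v $ k *\<^sub>R axis k (1::real))"
  by (metis (no_types) basis_expansion[of v] scalar_mult_eq_scaleR)

lemma linear_axis_expansion:
  assumes "linear D"
  shows "D v = (\<Sum>k\<in>UNIV. v $ k *\<^sub>R D (axis k (1::real)))"
proof -
  have "D v = D (\<Sum>k\<in>UNIV. v $ k *\<^sub>R axis k (1::real))" using vec_axis_expansion[of v] by simp
  also have "\<dots> = (\<Sum>k\<in>UNIV. v $ k *\<^sub>R D (axis k 1))"
    using assms by (simp add: linear_sum linear_scale)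
  finally show ?thesis .
qed

lemma diff_has_pd:
  assumes "g differentiable (at x)"
  shows "(g has_derivative (\<lambda>v. \<Sum>k\<in>UNIV. v $ k *\<^sub>R pd k g x)) (at x)"
proof -
  have d: "(g has_derivative frechet_derivative g (at x)) (at x)" using pd_works[OF assms] .
  have "linear (frechet_derivative g (at x))" using has_derivative_linear[OF d] .
  then have "frechet_derivative g (at x) = (\<lambda>v. \<Sum>k\<in>UNIV. v $ k *\<^sub>R pd k g x)"
    by (intro ext) (simp add: linear_axis_expansion[of _] pd_frechet)
  with d show ?thesis by simp
qed



lemma Ck_diff_at: "open U \<Longrightarrow> Ck (Suc k) U g \<Longrightarrow> x \<in> U \<Longrightarrow> g differentiable (at x)"
  by (simp add: differentiable_on_eq_differentiable_at)

lemma Ck_cong: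
  assumes "open U" shows "Ck k U g \<Longrightarrow> (\<And>x. x \<in> U \<Longrightarrow> g x = g' x) \<Longrightarrow> Ck k U g'"
proof (induction k arbitrary: g g')
  case 0 then show ?case using continuous_on_cong by force
next
  case (Suc k)
  have "g' differentiable_on U"
    unfolding differentiable_on_eq_differentiable_at[OF assms]
  proof
    fix x assume x: "x \<in> U"
    have "g differentiable (at x)" using Suc.prems(1) x assms
      by (simp add: differentiable_on_eq_differentiable_at)
    then show "g' differentiable (at x)" by (meson differentiable_cong_open[OF assms x] Suc.prems(2))
  qed
  moreover have "Ck k U (pd i g')" for i
    using Suc.IH[of "pd i g" "pd i g'"] Suc.prems pd_cong[OF assms _ Suc.prems(2)] by auto
  ultimately show ?case by simp
qed

lemma Ck_mono:
  assumes "open U" shows "Ck (Suc k) U g \<Longrightarrow> Ck k U g"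
proof (induction k arbitrary: g)
  case 0 then show ?case by (simp add: differentiable_imp_continuous_on)
next
  case (Suc k) then show ?case by simp
qed

lemma Ck_le: assumes "open U" "Ck k U g" "l \<le> k" shows "Ck l U g"
  using assms(2,3)
proof (induction k)
  case 0 then show ?case by simp
next
  case (Suc k) then show ?case using Ck_mono[OF assms(1)] le_Suc_eq by blast
qed

lemma Ck_add:
  fixes f g :: "real^3 \<Rightarrow> 'a::real_normed_vector"
  assumes "open U" shows "Ck k U f \<Longrightarrow> Ck k U g \<Longrightarrow> Ck k U (\<lambda>x. f x + g x)"
proof (induction k arbitrary: f g)
  case 0 then show ?case by (simp add: continuous_on_add)
next
  case (Suc k)
  have "(\<lambda>x. f x + g x) differentiable_on U" using Suc.prems by (simp add: differentiable_on_add)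
  moreover have "Ck k U (pd i (\<lambda>x. f x + g x))" for i
  proof -
    have "Ck k U (\<lambda>x. pd i f x + pd i g x)" using Suc by simp
    then show ?thesis
    proof (rule Ck_cong[OF assms])
      fix x assume x: "x \<in> U"
      have "f differentiable (at x)" "g differentiable (at x)"
        using Ck_diff_at[OF assms Suc.prems(1) x] Ck_diff_at[OF assms Suc.prems(2) x] .
      then show "pd i f x + pd i g x = pd i (\<lambda>x. f x + g x) x" by (simp add: pd_add)
    qed
  qed
  ultimately show ?case by simp
qed

lemma Ck_const: "open U \<Longrightarrow> Ck k U (\<lambda>x. c::'a::real_normed_vector)"
proof (induction k arbitrary: c)
  case 0 then show ?case by simp
next
  case (Suc k)
  have "pd i (\<lambda>x. c) = (\<lambda>x. 0)" for i by (rule ext) (simp add: pd_const)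
  then have "Ck k U (pd i (\<lambda>x. c))" for i using Suc by simp
  then show ?case by simp
qed

lemma bilinear_differentiable:
  fixes f :: "real^3 \<Rightarrow> 'a::real_normed_vector" and g :: "real^3 \<Rightarrow> 'b::real_normed_vector"
    and prod :: "'a \<Rightarrow> 'b \<Rightarrow> 'c::real_normed_vector"
  assumes "bounded_bilinear prod" "f differentiable (at x)" "g differentiable (at x)"
  shows "(\<lambda>y. prod (f y) (g y)) differentiable (at x)"
  using bounded_bilinear.FDERIV[OF assms(1) pd_works[OF assms(2)] pd_works[OF assms(3)]]
  unfolding differentiable_def by blast

lemma Ck_bilinear:
  fixes f :: "real^3 \<Rightarrow> 'a::real_normed_vector" and g :: "real^3 \<Rightarrow> 'b::real_normed_vector"
    and prod :: "'a \<Rightarrow> 'b \<Rightarrow> 'c::real_normed_vector"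
  assumes bl: "bounded_bilinear prod" and U: "open U"
  shows "Ck k U f \<Longrightarrow> Ck k U g \<Longrightarrow> Ck k U (\<lambda>x. prod (f x) (g x))"
proof (induction k arbitrary: f g)
  case 0 then show ?case using bounded_bilinear.continuous_on[OF bl] by (simp)
next
  case (Suc k)
  have "(\<lambda>x. prod (f x) (g x)) differentiable_on U"
    using Suc.prems U bilinear_differentiable[OF bl]
    by (auto simp: differentiable_on_eq_differentiable_at)
  moreover have "Ck k U (pd i (\<lambda>x. prod (f x) (g x)))" for i
  proof -
    have "Ck k U (\<lambda>x. prod (pd i f x) (g x) + prod (f x) (pd i g x))"
    proof (rule Ck_add[OF U])
      have f: "Ck k U f" and g: "Ck k U g" using Ck_mono[OF U] Suc.prems by blast+
      show "Ck k U (\<lambda>x. prod (pd i f x) (g x))" using Suc.IH[OF _ g] Suc.prems(1) by simp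
      show "Ck k U (\<lambda>x. prod (f x) (pd i g x))" using Suc.IH[OF f] Suc.prems(2) by simp
    qed
    then show ?thesis
    proof (rule Ck_cong[OF U])
      fix x assume x: "x \<in> U"
      have "f differentiable (at x)" "g differentiable (at x)"
        using Ck_diff_at[OF U Suc.prems(1) x] Ck_diff_at[OF U Suc.prems(2) x] .
      then show "prod (pd i f x) (g x) + prod (f x) (pd i g x) = pd i (\<lambda>x. prod (f x) (g x)) x"
        by (simp add: pd_bilinear[OF bl])
    qed
  qed
  ultimately show ?case by simp
qed

lemma Ck_inverse:
  fixes g :: "real^3 \<Rightarrow> real"
  assumes U: "open U" and nz: "\<And>x. x \<in> U \<Longrightarrow> g x \<noteq> 0"
  shows "Ck k U g \<Longrightarrow> Ck k U (\<lambda>x. inverse (g x))"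
proof (induction k)
  case 0 then show ?case using nz continuous_on_inverse[of U g] by auto
next
  case (Suc k)
  have d: "g differentiable (at x)" if "x \<in> U" for x using Ck_diff_at[OF U Suc.prems that] .
  have "(\<lambda>x. inverse (g x)) differentiable_on U"
    unfolding differentiable_on_eq_differentiable_at[OF U]
  proof
    fix x assume x: "x \<in> U"
    show "(\<lambda>x. inverse (g x)) differentiable (at x)"
      using Deriv.has_derivative_inverse[OF nz[OF x] pd_works[OF d[OF x]]] unfolding differentiable_def by blast
  qed
  moreover have "Ck k U (pd i (\<lambda>x. inverse (g x)))" for i
  proof -
    have gk: "Ck k U g" using Ck_mono[OF U] Suc.prems by blast
    have ik: "Ck k U (\<lambda>x. inverse (g x))" using Suc.IH[OF gk] .
    have pk: "Ck k U (pd i g)" using Suc.prems by simp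
    have "Ck k U (\<lambda>x. (-1) * pd i g x)"
      by (rule Ck_bilinear[OF bounded_bilinear_mult U Ck_const[OF U] pk])
    moreover have iik: "Ck k U (\<lambda>x. inverse (g x) * inverse (g x))"
      by (rule Ck_bilinear[OF bounded_bilinear_mult U ik ik])
    ultimately have "Ck k U (\<lambda>x. ((-1) * pd i g x) * (inverse (g x) * inverse (g x)))"
      by (rule Ck_bilinear[OF bounded_bilinear_mult U])
    then have "Ck k U (\<lambda>x. - pd i g x * (inverse (g x) * inverse (g x)))" by simp
    then show ?thesis
    proof (rule Ck_cong[OF U])
      fix x assume x: "x \<in> U"
      show "- pd i g x * (inverse (g x) * inverse (g x)) = pd i (\<lambda>x. inverse (g x)) x"
        using pd_inverse[OF d[OF x] nz[OF x]] by simp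
    qed
  qed
  ultimately show ?case by simp
qed

lemma Ck_ln:
  fixes g :: "real^3 \<Rightarrow> real"
  assumes U: "open U" and pos: "\<And>x. x \<in> U \<Longrightarrow> g x > 0"
  shows "Ck k U g \<Longrightarrow> Ck k U (\<lambda>x. ln (g x))"
proof (cases k)
  case 0 then show "Ck k U g \<Longrightarrow> ?thesis" using pos by (fastforce intro!: continuous_on_ln)
next
  case (Suc l)
  assume gk: "Ck k U g"
  have d: "g differentiable (at x)" if "x \<in> U" for x using Ck_diff_at[OF U] gk Suc that by blast
  have "(\<lambda>x. ln (g x)) differentiable_on U"
    unfolding differentiable_on_eq_differentiable_at[OF U]
  proof
    fix x assume x: "x \<in> U"
    have "((\<lambda>y. ln (g y)) has_derivative (\<lambda>h. frechet_derivative g (at x) h * inverse (g x))) (at x)"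
      by (rule derivative_eq_intros pd_works d x refl | simp add: pos x)+
    then show "(\<lambda>y. ln (g y)) differentiable (at x)" unfolding differentiable_def by blast
  qed
  moreover have "Ck l U (pd i (\<lambda>x. ln (g x)))" for i
  proof -
    have gl: "Ck l U g" using Ck_mono[OF U] gk Suc by blast
    have pk: "Ck l U (pd i g)" using gk Suc by simp
    have nz: "g x \<noteq> 0" if "x \<in> U" for x using pos[OF that] by simp
    have ik: "Ck l U (\<lambda>x. inverse (g x))" using Ck_inverse[OF U nz gl] by blast
    have "Ck l U (\<lambda>x. pd i g x * inverse (g x))"
      by (rule Ck_bilinear[OF bounded_bilinear_mult U pk ik])
    then show ?thesis
    proof (rule Ck_cong[OF U])
      fix x assume x: "x \<in> U"
      show "pd i g x * inverse (g x) = pd i (\<lambda>x. ln (g x)) x"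
        using pd_ln[OF d[OF x] pos[OF x]] by simp
    qed
  qed
  ultimately show "Ck k U (\<lambda>x. ln (g x))" using Suc by simp
qed

lemma smooth_Ck: "smooth_on3 U g \<Longrightarrow> Ck k U g" by (simp add: smooth_on3_def)

lemma smooth_diff: "open U \<Longrightarrow> smooth_on3 U g \<Longrightarrow> x \<in> U \<Longrightarrow> g differentiable (at x)"
  using Ck_diff_at smooth_Ck by blast

lemma smooth_cont: "smooth_on3 U g \<Longrightarrow> continuous_on U g"
  using smooth_Ck[of U g 0] by simp

lemma smooth_pd: "smooth_on3 U g \<Longrightarrow> smooth_on3 U (pd i g)"
  unfolding smooth_on3_def by (metis Ck.simps(2))

lemma smooth_intro:
  assumes "open U" "\<And>x. x \<in> U \<Longrightarrow> g differentiable (at x)" "\<And>i. smooth_on3 U (pd i g)"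
  shows "smooth_on3 U g"
  unfolding smooth_on3_def
proof
  fix k show "Ck k U g"
  proof (cases k)
    case 0 then show ?thesis using assms
      by (simp add: differentiable_imp_continuous_on differentiable_on_eq_differentiable_at)
  next
    case (Suc l) then show ?thesis using assms smooth_Ck[of U "pd i g" l for i]
      by (simp add: differentiable_on_eq_differentiable_at)
  qed
qed

lemma smooth_cong: "open U \<Longrightarrow> smooth_on3 U g \<Longrightarrow> (\<And>x. x \<in> U \<Longrightarrow> g x = g' x) \<Longrightarrow> smooth_on3 U g'"
  unfolding smooth_on3_def using Ck_cong by blast

lemma smooth_add: "open U \<Longrightarrow> smooth_on3 U f \<Longrightarrow> smooth_on3 U g \<Longrightarrow> smooth_on3 U (\<lambda>x. f x + g x)"
  unfolding smooth_on3_def using Ck_add by blast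

lemma smooth_const: "open U \<Longrightarrow> smooth_on3 U (\<lambda>x. c)"
  unfolding smooth_on3_def using Ck_const by blast

lemma smooth_bilinear:
  fixes f :: "real^3 \<Rightarrow> 'a::real_normed_vector" and g :: "real^3 \<Rightarrow> 'b::real_normed_vector"
    and prod :: "'a \<Rightarrow> 'b \<Rightarrow> 'c::real_normed_vector"
  shows "bounded_bilinear prod \<Longrightarrow> open U \<Longrightarrow> smooth_on3 U f \<Longrightarrow> smooth_on3 U g \<Longrightarrow> smooth_on3 U (\<lambda>x. prod (f x) (g x))"
  unfolding smooth_on3_def using Ck_bilinear by blast

lemma smooth_mult:
  fixes f g :: "real^3 \<Rightarrow> real"
  shows "open U \<Longrightarrow> smooth_on3 U f \<Longrightarrow> smooth_on3 U g \<Longrightarrow> smooth_on3 U (\<lambda>x. f x * g x)"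
  using smooth_bilinear[OF bounded_bilinear_mult] by blast

lemma smooth_scaleR:
  fixes f :: "real^3 \<Rightarrow> real" and g :: "real^3 \<Rightarrow> 'a::real_normed_vector"
  shows "open U \<Longrightarrow> smooth_on3 U f \<Longrightarrow> smooth_on3 U g \<Longrightarrow> smooth_on3 U (\<lambda>x. f x *\<^sub>R g x)"
  using smooth_bilinear[OF bounded_bilinear_scaleR] by blast

lemma smooth_inner:
  fixes f g :: "real^3 \<Rightarrow> 'a::real_inner"
  shows "open U \<Longrightarrow> smooth_on3 U f \<Longrightarrow> smooth_on3 U g \<Longrightarrow> smooth_on3 U (\<lambda>x. inner (f x) (g x))"
  using smooth_bilinear[OF bounded_bilinear_inner] by blast

lemma smooth_minus:
  fixes f :: "real^3 \<Rightarrow> 'a::real_normed_vector"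
  assumes "open U" "smooth_on3 U f" shows "smooth_on3 U (\<lambda>x. - f x)"
proof -
  have "smooth_on3 U (\<lambda>x. (-1::real) *\<^sub>R f x)" using smooth_scaleR[OF assms(1) smooth_const[OF assms(1)] assms(2)] .
  then show ?thesis by simp
qed

lemma smooth_diff_fun:
  fixes f g :: "real^3 \<Rightarrow> 'a::real_normed_vector"
  assumes "open U" "smooth_on3 U f" "smooth_on3 U g" shows "smooth_on3 U (\<lambda>x. f x - g x)"
  using smooth_add[OF assms(1,2) smooth_minus[OF assms(1,3)]] by simp

lemma smooth_inverse:
  fixes g :: "real^3 \<Rightarrow> real"
  shows "open U \<Longrightarrow> (\<And>x. x \<in> U \<Longrightarrow> g x \<noteq> 0) \<Longrightarrow> smooth_on3 U g \<Longrightarrow> smooth_on3 U (\<lambda>x. inverse (g x))"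
  unfolding smooth_on3_def using Ck_inverse by blast

lemma smooth_ln:
  fixes g :: "real^3 \<Rightarrow> real"
  shows "open U \<Longrightarrow> (\<And>x. x \<in> U \<Longrightarrow> g x > 0) \<Longrightarrow> smooth_on3 U g \<Longrightarrow> smooth_on3 U (\<lambda>x. ln (g x))"
  unfolding smooth_on3_def using Ck_ln by blast

lemma smooth_subset: "open V \<Longrightarrow> V \<subseteq> U \<Longrightarrow> smooth_on3 U g \<Longrightarrow> smooth_on3 V g"
proof -
  assume V: "open V" "V \<subseteq> U"
  have "Ck k U g \<Longrightarrow> Ck k V g" for k
  proof (induction k arbitrary: g)
    case 0 then show ?case using V continuous_on_subset by auto
  next
    case (Suc k) then show ?case using V differentiable_on_subset by auto
  qed
  then show "smooth_on3 U g \<Longrightarrow> smooth_on3 V g" unfolding smooth_on3_def by blast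
qed



lemma line_vd:
  assumes "G differentiable (at (y + s *\<^sub>R axis k 1))"
  shows "((\<lambda>s. G (y + s *\<^sub>R axis k 1)) has_vector_derivative pd k G (y + s *\<^sub>R axis k 1)) (at s within S)"
proof -
  have l: "((\<lambda>s. y + s *\<^sub>R axis k (1::real)) has_derivative (\<lambda>h. h *\<^sub>R axis k 1)) (at s within S)"
    by (rule derivative_eq_intros refl)+ simp
  have d: "(G has_derivative frechet_derivative G (at (y + s *\<^sub>R axis k 1))) (at (y + s *\<^sub>R axis k 1))"
    using pd_works[OF assms] .
  have c: "((\<lambda>s. G (y + s *\<^sub>R axis k 1)) has_derivative
      (\<lambda>h. frechet_derivative G (at (y + s *\<^sub>R axis k 1)) (h *\<^sub>R axis k 1))) (at s within S)"
    using has_derivative_compose[OF l d] by (simp add: o_def)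
  have lin: "linear (frechet_derivative G (at (y + s *\<^sub>R axis k 1)))" using has_derivative_linear[OF d] .
  show ?thesis
    unfolding has_vector_derivative_def
    using c by (simp add: linear_scale[OF lin] pd_frechet)
qed

lemma pd_sym:
  fixes g :: "real^3 \<Rightarrow> 'a::banach"
  assumes U: "open U" and x: "x \<in> U" and g: "Ck 2 U g"
  shows "pd i (pd j g) x = pd j (pd i g) x"
proof -
  have gd: "\<And>y. y \<in> U \<Longrightarrow> g differentiable (at y)"
    using g U by (simp add: numeral_2_eq_2 differentiable_on_eq_differentiable_at)
  have g1d: "\<And>y k. y \<in> U \<Longrightarrow> pd k g differentiable (at y)"
    using g U by (simp add: numeral_2_eq_2 differentiable_on_eq_differentiable_at)
  have g2c: "\<And>k l. continuous_on U (pd l (pd k g))"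
    using g U by (simp add: numeral_2_eq_2)
  have g1c: "\<And>k. continuous_on U (pd k g)"
    using g U by (simp add: numeral_2_eq_2 differentiable_imp_continuous_on)
  obtain e where e: "e > 0" "ball x e \<subseteq> U" using U x open_contains_ball by blast
  define d where "d = e / 3"
  have d0: "d > 0" using e by (simp add: d_def)
  define ei where "ei = axis i (1::real)"
  define ej where "ej = axis j (1::real)"
  define P where "P s t = x + t *\<^sub>R ej + s *\<^sub>R ei" for s t
  have nei: "norm ei = 1" "norm ej = 1" by (simp_all add: ei_def ej_def)
  have PU: "P s t \<in> U" if "\<bar>s\<bar> \<le> d" "\<bar>t\<bar> \<le> d" for s t
  proof -
    have "norm (P s t - x) \<le> \<bar>t\<bar> + \<bar>s\<bar>"
      unfolding P_def using norm_triangle_ineq[of "t *\<^sub>R ej" "s *\<^sub>R ei"] nei by simp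
    also have "\<dots> < e" using that d0 by (simp add: d_def)
    finally show ?thesis using e by (auto simp: dist_norm norm_minus_commute)
  qed
  have P2: "P s t = (x + s *\<^sub>R ei) + t *\<^sub>R ej" for s t by (simp add: P_def algebra_simps)
  have P0: "P s 0 = x + s *\<^sub>R ei" for s by (simp add: P_def)
  define k where "k \<sigma> = pd j (pd i g) (x + \<sigma> *\<^sub>R ei)" for \<sigma>
  have step1: "g (P s t) - g (P (-d) t) = integral {-d..s} (\<lambda>\<sigma>. pd i g (P \<sigma> t))"
    if s: "-d \<le> s" "s \<le> d" and t: "\<bar>t\<bar> \<le> d" for s t
  proof -
    have "((\<lambda>\<sigma>. pd i g (P \<sigma> t)) has_integral (g (P s t) - g (P (-d) t))) {-d..s}"
    proof (rule fundamental_theorem_of_calculus)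
      show "-d \<le> s" using s(1) .
      fix \<sigma> assume "\<sigma> \<in> {-d..s}"
      then have "P \<sigma> t \<in> U" using PU[of \<sigma> t] s t by auto
      then show "((\<lambda>\<sigma>. g (P \<sigma> t)) has_vector_derivative pd i g (P \<sigma> t)) (at \<sigma> within {-d..s})"
        using line_vd[of g "x + t *\<^sub>R ej" \<sigma> i "{-d..s}"] gd unfolding P_def ei_def by simp
    qed
    then show ?thesis by (simp add: integral_unique)
  qed
  have step2: "pd j g (x + s *\<^sub>R ei) - pd j g (x + (-d) *\<^sub>R ei) = integral {-d..s} k"
    if s: "-d \<le> s" "s \<le> d" for s
  proof -
    define T where "T = {-d<..<d}"
    have T: "open T" "convex T" "0 \<in> T" using d0 by (auto simp: T_def)
    have Tin: "t \<in> T \<Longrightarrow> \<bar>t\<bar> \<le> d" for t by (auto simp: T_def)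
    have cb: "cbox (-d) s = {-d..s}" by simp
    have in_U: "P \<sigma> t \<in> U" if "t \<in> T" "\<sigma> \<in> {-d..s}" for \<sigma> t
      using PU[of \<sigma> t] that s Tin by auto
    have L: "((\<lambda>t. integral (cbox (-d) s) (\<lambda>\<sigma>. pd i g (P \<sigma> t))) has_vector_derivative
              integral (cbox (-d) s) (\<lambda>\<sigma>. pd j (pd i g) (P \<sigma> 0))) (at 0 within T)"
    proof (rule leibniz_rule_vector_derivative[OF _ _ _ T(3,2)])
      fix t \<sigma> assume "t \<in> T" "\<sigma> \<in> cbox (-d) s"
      then have "P \<sigma> t \<in> U" using in_U by simp
      then show "((\<lambda>t. pd i g (P \<sigma> t)) has_vector_derivative pd j (pd i g) (P \<sigma> t)) (at t within T)"
        using line_vd[of "pd i g" "x + \<sigma> *\<^sub>R ei" t j T] g1d unfolding P2 ej_def by simp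
    next
      fix t assume t: "t \<in> T"
      have "continuous_on {-d..s} (\<lambda>\<sigma>. pd i g (P \<sigma> t))"
        unfolding P_def
        by (rule continuous_on_compose2[OF g1c[of i]]) (use in_U t in \<open>auto intro!: continuous_intros simp: P_def\<close>)
      then show "(\<lambda>\<sigma>. pd i g (P \<sigma> t)) integrable_on cbox (-d) s"
        by (simp add: integrable_continuous_real)
    next
      have c1: "continuous_on (T \<times> cbox (-d) s) (\<lambda>z. x + fst z *\<^sub>R ej + snd z *\<^sub>R ei)"
        by (intro continuous_intros)
      have c2: "(\<lambda>z. x + fst z *\<^sub>R ej + snd z *\<^sub>R ei) ` (T \<times> cbox (-d) s) \<subseteq> U"
      proof (clarify)
        fix t \<sigma> assume "t \<in> T" "\<sigma> \<in> cbox (-d) s"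
        then show "x + fst (t, \<sigma>) *\<^sub>R ej + snd (t, \<sigma>) *\<^sub>R ei \<in> U" using in_U[of t \<sigma>] by (simp add: P_def)
      qed
      have "continuous_on (T \<times> cbox (-d) s) (\<lambda>z. pd j (pd i g) (x + fst z *\<^sub>R ej + snd z *\<^sub>R ei))"
        using continuous_on_compose2[OF g2c c1 c2] .
      then show "continuous_on (T \<times> cbox (-d) s) (\<lambda>(t, \<sigma>). pd j (pd i g) (P \<sigma> t))"
        by (simp add: split_beta P_def)
    qed
    have e1: "(\<lambda>\<sigma>. pd j (pd i g) (P \<sigma> 0)) = k" by (rule ext) (simp only: P0 k_def)
    have L': "((\<lambda>t. integral {-d..s} (\<lambda>\<sigma>. pd i g (P \<sigma> t))) has_vector_derivative
              integral {-d..s} k) (at 0)"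
      using L unfolding cb e1 has_vector_derivative_within_open[OF T(3) T(1)] .
    have lv: "((\<lambda>t. g (P a t)) has_vector_derivative pd j g (x + a *\<^sub>R ei)) (at 0)"
      if "\<bar>a\<bar> \<le> d" for a
    proof -
      have "P a 0 \<in> U" using PU that d0 by simp
      then have "g differentiable (at (x + a *\<^sub>R ei + 0 *\<^sub>R axis j 1))" using gd by (simp add: P0)
      from line_vd[OF this, of UNIV] have
        "((\<lambda>t. g (x + a *\<^sub>R ei + t *\<^sub>R ej)) has_vector_derivative pd j g (x + a *\<^sub>R ei)) (at 0)"
        by (simp add: ej_def)
      moreover have "(\<lambda>t. g (P a t)) = (\<lambda>t. g (x + a *\<^sub>R ei + t *\<^sub>R ej))" by (rule ext) (simp only: P2)
      ultimately show ?thesis by simp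
    qed
    have R: "((\<lambda>t. g (P s t) - g (P (-d) t)) has_vector_derivative
               pd j g (x + s *\<^sub>R ei) - pd j g (x + (-d) *\<^sub>R ei)) (at 0)"
      by (rule has_vector_derivative_diff[OF lv lv]) (use s d0 in auto)
    have R': "((\<lambda>t. integral {-d..s} (\<lambda>\<sigma>. pd i g (P \<sigma> t))) has_vector_derivative
               pd j g (x + s *\<^sub>R ei) - pd j g (x + (-d) *\<^sub>R ei)) (at 0)"
    proof (rule has_vector_derivative_transform_within_open[OF R T(1) T(3)])
      fix t assume "t \<in> T"
      then show "g (P s t) - g (P (-d) t) = integral {-d..s} (\<lambda>\<sigma>. pd i g (P \<sigma> t))"
        using step1[OF s Tin] by blast
    qed
    show ?thesis using vector_derivative_unique_at[OF R' L'] by simp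
  qed
  have kc: "continuous_on {-d..d} k"
  proof -
    have c1: "continuous_on {-d..d} (\<lambda>\<sigma>. x + \<sigma> *\<^sub>R ei)" by (intro continuous_intros)
    have c2: "(\<lambda>\<sigma>. x + \<sigma> *\<^sub>R ei) ` {-d..d} \<subseteq> U"
    proof clarify
      fix \<sigma> :: real assume "\<sigma> \<in> {-d..d}"
      then have "P \<sigma> 0 \<in> U" using PU[of \<sigma> 0] d0 by (simp add: abs_le_iff)
      then show "x + \<sigma> *\<^sub>R ei \<in> U" by (simp only: P0)
    qed
    show ?thesis unfolding k_def using continuous_on_compose2[OF g2c c1 c2] .
  qed
  have I: "((\<lambda>s. integral {-d..s} k) has_vector_derivative k 0) (at 0)"
  proof -
    have "((\<lambda>s. integral {-d..s} k) has_vector_derivative k 0) (at 0 within {-d..d})"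
      using integral_has_vector_derivative[OF kc] d0 by simp
    then have "((\<lambda>s. integral {-d..s} k) has_vector_derivative k 0) (at 0 within {-d<..<d})"
      by (rule has_vector_derivative_within_subset) auto
    moreover have z: "(0::real) \<in> {-d<..<d}" using d0 by simp
    ultimately show ?thesis using has_vector_derivative_within_open[OF z open_greaterThanLessThan] by blast
  qed
  have I2: "((\<lambda>s. integral {-d..s} k + pd j g (x + (-d) *\<^sub>R ei)) has_vector_derivative k 0) (at 0)"
    by (subst has_vector_derivative_add_const) (rule I)
  have U2: "((\<lambda>s. pd j g (x + s *\<^sub>R ei)) has_vector_derivative k 0) (at 0)"
  proof (rule has_vector_derivative_transform_within_open[OF I2, of "{-d<..<d}"])
    fix s assume "s \<in> {-d<..<d}"
    then show "integral {-d..s} k + pd j g (x + (-d) *\<^sub>R ei) = pd j g (x + s *\<^sub>R ei)"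
      using step2[of s] by (simp add: algebra_simps)
  next
    show "open {-d<..<d}" by simp
    show "(0::real) \<in> {-d<..<d}" using d0 by simp
  qed
  have "pd j g differentiable (at (x + 0 *\<^sub>R axis i 1))" using g1d x by simp
  from line_vd[OF this, of UNIV]
  have U3: "((\<lambda>s. pd j g (x + s *\<^sub>R ei)) has_vector_derivative pd i (pd j g) x) (at 0)"
    unfolding ei_def by simp
  show ?thesis using vector_derivative_unique_at[OF U3 U2] by (simp add: k_def)
qed



lemma line_vdw:
  assumes "G differentiable (at (a + t *\<^sub>R w))"
  shows "((\<lambda>t. G (a + t *\<^sub>R w)) has_vector_derivative (\<Sum>j\<in>UNIV. w $ j *\<^sub>R pd j G (a + t *\<^sub>R w))) (at t within S)"
proof -
  have l: "((\<lambda>t. a + t *\<^sub>R w) has_derivative (\<lambda>h. h *\<^sub>R w)) (at t within S)"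
    by (rule derivative_eq_intros refl)+ simp
  have d: "(G has_derivative (\<lambda>v. \<Sum>k\<in>UNIV. v $ k *\<^sub>R pd k G (a + t *\<^sub>R w))) (at (a + t *\<^sub>R w))"
    using diff_has_pd[OF assms] .
  have c: "((\<lambda>t. G (a + t *\<^sub>R w)) has_derivative
      (\<lambda>h. \<Sum>k\<in>UNIV. (h *\<^sub>R w) $ k *\<^sub>R pd k G (a + t *\<^sub>R w))) (at t within S)"
    using has_derivative_compose[OF l d] by (simp add: o_def)
  show ?thesis
    unfolding has_vector_derivative_def
    using c by (simp add: scaleR_sum_right)
qed

lemma Basis_vec3: "b \<in> (Basis :: (real^3) set) \<Longrightarrow> \<exists>k. b = axis k 1"
  by (auto simp: Basis_vec_def)

lemma sum_swap_closed:
  fixes P :: "3 \<Rightarrow> 3 \<Rightarrow> 'b::real_vector"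
  assumes "\<And>i j. P j i = P i j"
  shows "(\<Sum>i\<in>UNIV. v $ i *\<^sub>R (\<Sum>j\<in>UNIV. w $ j *\<^sub>R P i j)) =
         (\<Sum>i\<in>UNIV. w $ i *\<^sub>R (\<Sum>j\<in>UNIV. v $ j *\<^sub>R P i j))"
proof -
  have "(\<Sum>i\<in>UNIV. v $ i *\<^sub>R (\<Sum>j\<in>UNIV. w $ j *\<^sub>R P i j)) = (\<Sum>i\<in>UNIV. \<Sum>j\<in>UNIV. (v $ i * w $ j) *\<^sub>R P i j)"
    by (simp add: scaleR_sum_right)
  also have "\<dots> = (\<Sum>j\<in>UNIV. \<Sum>i\<in>UNIV. (v $ i * w $ j) *\<^sub>R P i j)" by (rule sum.swap)
  also have "\<dots> = (\<Sum>i\<in>UNIV. \<Sum>j\<in>UNIV. (w $ i * v $ j) *\<^sub>R P i j)"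
    by (simp add: assms mult.commute)
  also have "\<dots> = (\<Sum>i\<in>UNIV. w $ i *\<^sub>R (\<Sum>j\<in>UNIV. v $ j *\<^sub>R P i j))"
    by (simp add: scaleR_sum_right)
  finally show ?thesis .
qed

lemma poincare:
  fixes F :: "3 \<Rightarrow> real^3 \<Rightarrow> 'b::banach"
  assumes r: "0 < r"
    and Fd: "\<And>i y. y \<in> ball x0 r \<Longrightarrow> F i differentiable (at y)"
    and Fc: "\<And>i. continuous_on (ball x0 r) (F i)"
    and Fdc: "\<And>i j. continuous_on (ball x0 r) (pd j (F i))"
    and cl: "\<And>i j y. y \<in> ball x0 r \<Longrightarrow> pd j (F i) y = pd i (F j) y"
  shows "\<exists>G. \<forall>x\<in>ball x0 r. (G has_derivative (\<lambda>v. \<Sum>i\<in>UNIV. v $ i *\<^sub>R F i x)) (at x)"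
proof -
  define B where "B = ball x0 r"
  define y where "y x t = x0 + t *\<^sub>R (x - x0)" for x :: "real^3" and t :: real
  define ig where "ig x t = (\<Sum>i\<in>UNIV. (x - x0) $ i *\<^sub>R F i (y x t))" for x t
  define DF where "DF i z v = (\<Sum>j\<in>UNIV. v $ j *\<^sub>R pd j (F i) z)" for i z and v :: "real^3"
  define fl where "fl x t = (\<lambda>v. \<Sum>i\<in>UNIV. v $ i *\<^sub>R F i (y x t) + (x - x0) $ i *\<^sub>R (t *\<^sub>R DF i (y x t) v))" for x t
  define fx where "fx x t = Blinfun (fl x t)" for x t
  have yB: "y x t \<in> B" if "x \<in> B" "t \<in> {0..1}" for x t
  proof -
    have "dist x0 (y x t) = \<bar>t\<bar> * norm (x - x0)" by (simp add: y_def dist_norm)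
    also have "\<dots> \<le> norm (x - x0)" using that by (intro mult_left_le_one_le) auto
    also have "\<dots> < r" using that by (simp add: B_def dist_norm norm_minus_commute)
    finally show ?thesis by (simp add: B_def)
  qed
  have DFlin: "bounded_linear (DF i z)" for i z
    unfolding DF_def by (intro bounded_linear_intros bounded_linear_vec_nth)
  have bl: "bounded_linear (fl x t)" for x t
    unfolding fl_def by (intro bounded_linear_intros bounded_linear_vec_nth DFlin bounded_linear_compose[OF DFlin])
  have fx_apply: "blinfun_apply (fx x t) = fl x t" for x t
    unfolding fx_def using bl by (simp add: bounded_linear_Blinfun_apply)
  have hd: "((\<lambda>x. ig x t) has_derivative blinfun_apply (fx x t)) (at x within B)"
    if x: "x \<in> B" and t: "t \<in> cbox 0 1" for x t
  proof -
    have yd: "((\<lambda>x. y x t) has_derivative (\<lambda>v. t *\<^sub>R v)) (at x within B)"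
      unfolding y_def by (rule derivative_eq_intros refl)+ (simp add: algebra_simps)
    have Fdi: "(F i has_derivative DF i (y x t)) (at (y x t))" for i
    proof -
      have t': "t \<in> {0..1}" using t by simp
      show ?thesis unfolding DF_def using diff_has_pd[OF Fd[OF yB[OF x t', unfolded B_def]]] .
    qed
    have comp: "((\<lambda>x. F i (y x t)) has_derivative (\<lambda>v. DF i (y x t) (t *\<^sub>R v))) (at x within B)" for i
      using has_derivative_compose[OF yd Fdi] by (simp add: o_def)
    have cd: "((\<lambda>x. (x - x0) $ i) has_derivative (\<lambda>v. v $ i)) (at x within B)" for i
    proof -
      have "((\<lambda>x. x $ i - x0 $ i) has_derivative (\<lambda>v. v $ i - 0)) (at x within B)"
        by (rule has_derivative_diff[OF bounded_linear_imp_has_derivative[OF bounded_linear_vec_nth] has_derivative_const])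
      then show ?thesis by simp
    qed
    have "((\<lambda>x. ig x t) has_derivative
        (\<lambda>v. \<Sum>i\<in>UNIV. (x - x0) $ i *\<^sub>R DF i (y x t) (t *\<^sub>R v) + v $ i *\<^sub>R F i (y x t))) (at x within B)"
      unfolding ig_def by (intro has_derivative_sum has_derivative_scaleR cd comp)
    moreover have "(\<lambda>v. \<Sum>i\<in>UNIV. (x - x0) $ i *\<^sub>R DF i (y x t) (t *\<^sub>R v) + v $ i *\<^sub>R F i (y x t)) = fl x t"
      by (rule ext) (simp add: fl_def linear_scale[OF bounded_linear.linear[OF DFlin]] add.commute)
    ultimately show ?thesis by (simp add: fx_apply)
  qed
  have ycont: "continuous_on S (\<lambda>z. y (fst z) (snd z))" for S
    unfolding y_def by (intro continuous_intros)
  have yimg: "(\<lambda>z. y (fst z) (snd z)) ` (B \<times> cbox 0 1) \<subseteq> B" using yB by auto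
  have Fc2: "continuous_on (B \<times> cbox 0 1) (\<lambda>z. F i (y (fst z) (snd z)))" for i
    using continuous_on_compose2[OF Fc[of i, folded B_def] ycont yimg] .
  have Fdc2: "continuous_on (B \<times> cbox 0 1) (\<lambda>z. pd j (F i) (y (fst z) (snd z)))" for i j
    using continuous_on_compose2[OF Fdc[where i=i and j=j, folded B_def] ycont yimg] .
  have igc: "continuous_on (cbox 0 1) (ig x)" if x: "x \<in> B" for x
  proof -
    have img: "(\<lambda>t. y x t) ` cbox 0 1 \<subseteq> B" using yB x by auto
    have yc: "continuous_on (cbox 0 1) (\<lambda>t. y x t)" unfolding y_def by (intro continuous_intros)
    show ?thesis unfolding ig_def
      by (intro continuous_on_sum continuous_on_scaleR continuous_on_const
          continuous_on_compose2[OF Fc[of _, folded B_def] yc img])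
  qed
  have cont_fx: "continuous_on (B \<times> cbox 0 1) (\<lambda>(x, t). fx x t)"
  proof (rule continuous_on_blinfun_componentwise)
    fix b :: "real^3" assume "b \<in> Basis"
    then obtain k where b: "b = axis k 1" using Basis_vec3 by blast
    have eq: "(\<lambda>z. fx (fst z) (snd z) b) = (\<lambda>z. F k (y (fst z) (snd z)) +
        (\<Sum>i\<in>UNIV. (fst z - x0) $ i *\<^sub>R (snd z *\<^sub>R pd k (F i) (y (fst z) (snd z)))))"
      by (rule ext) (simp add: fx_apply fl_def b DF_def pd_axis_sum sum.distrib)
    have c: "continuous_on (B \<times> cbox 0 1) (\<lambda>z. F k (y (fst z) (snd z)) +
        (\<Sum>i\<in>UNIV. (fst z - x0) $ i *\<^sub>R (snd z *\<^sub>R pd k (F i) (y (fst z) (snd z)))))"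
      by (intro continuous_intros Fc2 Fdc2)
    show "continuous_on (B \<times> cbox 0 1) (\<lambda>x. (case x of (x, t) \<Rightarrow> fx x t) b)"
      unfolding split_beta by (subst eq) (rule c)
  qed
  define G where "G x = integral (cbox 0 1) (ig x)" for x
  have "(G has_derivative (\<lambda>v. \<Sum>i\<in>UNIV. v $ i *\<^sub>R F i x)) (at x)" if x: "x \<in> B" for x
  proof -
    have L: "(G has_derivative blinfun_apply (integral (cbox 0 1) (fx x))) (at x within B)"
      unfolding G_def
    proof (rule leibniz_rule[OF hd _ cont_fx x])
      show "\<And>x. x \<in> B \<Longrightarrow> ig x integrable_on cbox 0 1" using igc integrable_continuous by blast
      show "convex B" by (simp add: B_def)
    qed
    then have L': "(G has_derivative blinfun_apply (integral (cbox 0 1) (fx x))) (at x)"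
    proof -
      have oB: "open B" by (simp add: B_def)
      show ?thesis using L by (simp only: at_within_open[OF x oB])
    qed
    have fxi: "fx x integrable_on cbox 0 1"
    proof -
      have c1: "continuous_on (cbox 0 1) (\<lambda>t. (x, t))" by (intro continuous_intros)
      have c2: "(\<lambda>t. (x, t)) ` cbox 0 1 \<subseteq> B \<times> cbox 0 1" using x by auto
      have "continuous_on (cbox 0 1) (\<lambda>t. fx x t)"
        using continuous_on_compose2[OF cont_fx c1 c2] by simp
      then show ?thesis by (rule integrable_continuous)
    qed
    have "blinfun_apply (integral (cbox 0 1) (fx x)) v = (\<Sum>i\<in>UNIV. v $ i *\<^sub>R F i x)" for v
    proof -
      have bv: "bounded_linear (\<lambda>L. blinfun_apply L v)"
        by (rule bounded_bilinear.bounded_linear_left[OF bounded_bilinear_blinfun_apply])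
      have "blinfun_apply (integral (cbox 0 1) (fx x)) v = integral (cbox 0 1) (\<lambda>t. fl x t v)"
        using integral_linear[OF fxi bv] unfolding o_def fx_apply by (rule sym)
      also have "\<dots> = (\<Sum>i\<in>UNIV. v $ i *\<^sub>R F i x)"
      proof -
        define \<Psi> where "\<Psi> t = (\<Sum>i\<in>UNIV. v $ i *\<^sub>R F i (y x t))" for t
        have "((\<lambda>t. fl x t v) has_integral (1 *\<^sub>R \<Psi> 1 - 0 *\<^sub>R \<Psi> 0)) {0..1}"
        proof (rule fundamental_theorem_of_calculus[where f="\<lambda>t. t *\<^sub>R \<Psi> t"])
          fix t :: real assume t: "t \<in> {0..1}"
          have yt: "y x t \<in> B" using yB[OF x t] .
          have Fi: "((\<lambda>t. F i (y x t)) has_vector_derivative DF i (y x t) (x - x0)) (at t within {0..1})" for i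
            using line_vdw[of "F i" x0 t "x - x0" "{0..1}"] Fd[of "y x t" i] yt
            unfolding y_def DF_def by (simp add: B_def)
          have Psi: "(\<Psi> has_vector_derivative (\<Sum>i\<in>UNIV. v $ i *\<^sub>R DF i (y x t) (x - x0))) (at t within {0..1})"
            unfolding \<Psi>_def
            by (intro has_vector_derivative_sum bounded_linear.has_vector_derivative[OF bounded_linear_scaleR_right] Fi)
          have "((\<lambda>t. t *\<^sub>R \<Psi> t) has_vector_derivative
                 (t *\<^sub>R (\<Sum>i\<in>UNIV. v $ i *\<^sub>R DF i (y x t) (x - x0)) + 1 *\<^sub>R \<Psi> t)) (at t within {0..1})"
            by (rule has_vector_derivative_scaleR[OF DERIV_ident Psi])
          moreover have "t *\<^sub>R (\<Sum>i\<in>UNIV. v $ i *\<^sub>R DF i (y x t) (x - x0)) + 1 *\<^sub>R \<Psi> t = fl x t v"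
          proof -
            have sw: "(\<Sum>i\<in>UNIV. v $ i *\<^sub>R DF i (y x t) (x - x0)) =
                      (\<Sum>i\<in>UNIV. (x - x0) $ i *\<^sub>R DF i (y x t) v)"
              unfolding DF_def
            proof (rule sum_swap_closed)
              fix i j
              have "y x t \<in> ball x0 r" using yt by (simp add: B_def)
              then show "pd i (F j) (y x t) = pd j (F i) (y x t)" by (rule cl)
            qed
            show ?thesis
              by (simp add: fl_def \<Psi>_def sw sum.distrib scaleR_sum_right add.commute mult.commute)
          qed
          ultimately show "((\<lambda>t. t *\<^sub>R \<Psi> t) has_vector_derivative fl x t v) (at t within {0..1})" by simp
        qed simp
        then have "integral {0..1} (\<lambda>t. fl x t v) = \<Psi> 1" by (simp add: integral_unique)
        moreover have "\<Psi> 1 = (\<Sum>i\<in>UNIV. v $ i *\<^sub>R F i x)" by (simp add: \<Psi>_def y_def)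
        ultimately show ?thesis by simp
      qed
      finally show ?thesis .
    qed
    then have "blinfun_apply (integral (cbox 0 1) (fx x)) = (\<lambda>v. \<Sum>i\<in>UNIV. v $ i *\<^sub>R F i x)"
      by (intro ext)
    then show ?thesis using L' by (simp only:)
  qed
  then show ?thesis unfolding B_def by blast
qed



definition LL :: "(real^3 \<Rightarrow> real^3) \<Rightarrow> 3 \<Rightarrow> real^3 \<Rightarrow> real" where
  "LL f i = (\<lambda>y. ln (lame f i y))"

definition aa :: "(real^3 \<Rightarrow> real^3) \<Rightarrow> 3 \<Rightarrow> 3 \<Rightarrow> real^3 \<Rightarrow> real" where
  "aa f i j = pd j (LL f i)"

lemma pd_sym_smooth:
  fixes g :: "real^3 \<Rightarrow> 'a::banach"
  shows "open U \<Longrightarrow> smooth_on3 U g \<Longrightarrow> x \<in> U \<Longrightarrow> pd i (pd j g) x = pd j (pd i g) x"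
  using pd_sym smooth_Ck by blast

lemma ln_differentiable:
  fixes g :: "real^3 \<Rightarrow> real"
  assumes "g differentiable (at x)" "g x > 0"
  shows "(\<lambda>y. ln (g y)) differentiable (at x)"
proof -
  have "((\<lambda>y. ln (g y)) has_derivative (\<lambda>h. frechet_derivative g (at x) h * inverse (g x))) (at x)"
    by (rule derivative_eq_intros pd_works assms refl | simp add: assms)+
  then show ?thesis unfolding differentiable_def by blast
qed

lemma smooth_pd2: "smooth_on3 U g \<Longrightarrow> smooth_on3 U (pd j (pd i g))"
  by (simp add: smooth_pd)

context
  fixes U :: "(real^3) set" and f :: "real^3 \<Rightarrow> real^3"
  assumes U: "open U" and TO: "triply_orthogonal U f"
begin

lemma to_smooth: "smooth_on3 U f"
  using TO by (simp add: triply_orthogonal_def)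

lemma to_det: "x \<in> U \<Longrightarrow> det (\<chi> i. pd i f x) \<noteq> 0"
  using TO by (simp add: triply_orthogonal_def)

lemma to_orth: "x \<in> U \<Longrightarrow> i \<noteq> j \<Longrightarrow> inner (pd i f x) (pd j f x) = 0"
  using TO by (simp add: triply_orthogonal_def)

lemma to_zero:
  assumes x: "x \<in> U" and h: "\<And>m. inner v (pd m f x) = 0"
  shows "v = 0"
proof -
  have inv: "invertible (\<chi> i. pd i f x)" using to_det[OF x] by (simp add: invertible_det_nz)
  then obtain B where B: "B ** (\<chi> i. pd i f x) = mat 1" using invertible_left_inverse by blast
  have "(\<chi> i. pd i f x) *v v = 0"
    by (simp add: vec_eq_iff matrix_vector_mul_component h inner_commute)
  then show ?thesis using B matrix_left_invertible_ker by blast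
qed

lemma to_nz: "x \<in> U \<Longrightarrow> pd i f x \<noteq> 0"
proof
  assume x: "x \<in> U" and z: "pd i f x = 0"
  have "row i (\<chi> i. pd i f x) = 0" using z by (simp add: row_def vec_eq_iff)
  then have "det (\<chi> i. pd i f x) = 0" by (rule det_zero_row(1))
  with to_det[OF x] show False by simp
qed

lemma to_sq_pos: "x \<in> U \<Longrightarrow> inner (pd i f x) (pd i f x) > 0"
  using to_nz by simp

lemma f1_smooth: "smooth_on3 U (pd i f)"
  using to_smooth smooth_pd by blast

lemma f2_smooth: "smooth_on3 U (pd j (pd i f))"
  using to_smooth smooth_pd by blast

lemma f1_diff: "x \<in> U \<Longrightarrow> pd i f differentiable (at x)"
  using smooth_diff[OF U f1_smooth] .

lemma f2_diff: "x \<in> U \<Longrightarrow> pd j (pd i f) differentiable (at x)"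
  using smooth_diff[OF U f2_smooth] .

lemma sq_smooth: "smooth_on3 U (\<lambda>y. inner (pd i f y) (pd i f y))"
  using smooth_inner[OF U f1_smooth f1_smooth] .

lemma LL_eq: "x \<in> U \<Longrightarrow> LL f i x = inverse 2 * ln (inner (pd i f x) (pd i f x))"
proof -
  assume x: "x \<in> U"
  have n: "norm (pd i f x) > 0" using to_nz[OF x] by simp
  have "inner (pd i f x) (pd i f x) = norm (pd i f x) ^ 2" by (simp add: power2_norm_eq_inner)
  then have "ln (inner (pd i f x) (pd i f x)) = 2 * ln (norm (pd i f x))" using n by (simp add: ln_realpow)
  then show ?thesis by (simp add: LL_def lame_def)
qed

lemma LL_smooth: "smooth_on3 U (LL f i)"
proof -
  have s: "smooth_on3 U (\<lambda>y. ln (inner (pd i f y) (pd i f y)))"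
    by (rule smooth_ln[OF U to_sq_pos sq_smooth])
  have s2: "smooth_on3 U (\<lambda>y. inverse 2 * ln (inner (pd i f y) (pd i f y)))"
    by (rule smooth_mult[OF U smooth_const[OF U] s])
  show ?thesis
  proof (rule smooth_cong[OF U s2])
    fix x assume "x \<in> U"
    then show "inverse 2 * ln (inner (pd i f x) (pd i f x)) = LL f i x" by (simp add: LL_eq)
  qed
qed

lemma aa_smooth: "smooth_on3 U (aa f i j)"
  unfolding aa_def using LL_smooth smooth_pd by blast

lemma aa_diff: "x \<in> U \<Longrightarrow> aa f i j differentiable (at x)"
  using smooth_diff[OF U aa_smooth] .

lemma aa_eq:
  assumes x: "x \<in> U"
  shows "aa f i j x = inner (pd j (pd i f) x) (pd i f x) / inner (pd i f x) (pd i f x)"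
proof -
  have "aa f i j x = pd j (\<lambda>y. inverse 2 * ln (inner (pd i f y) (pd i f y))) x"
    unfolding aa_def by (rule pd_cong[OF U x]) (simp add: LL_eq)
  also have "\<dots> = inverse 2 * pd j (\<lambda>y. ln (inner (pd i f y) (pd i f y))) x"
  proof -
    have d: "(\<lambda>y. ln (inner (pd i f y) (pd i f y))) differentiable (at x)"
      by (intro ln_differentiable bilinear_differentiable[OF bounded_bilinear_inner] f1_diff x to_sq_pos)
    show ?thesis using pd_mult[OF differentiable_const[of "inverse 2"] d, of j]
      by (simp only: pd_const mult_zero_left add_0_left)
  qed
  also have "\<dots> = inverse 2 * (pd j (\<lambda>y. inner (pd i f y) (pd i f y)) x * inverse (inner (pd i f x) (pd i f x)))"
  proof -
    have d2: "(\<lambda>y. inner (pd i f y) (pd i f y)) differentiable (at x)"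
      by (intro bilinear_differentiable[OF bounded_bilinear_inner] f1_diff x)
    show ?thesis using pd_ln[OF d2 to_sq_pos[OF x], of j] by simp
  qed
  also have "\<dots> = inner (pd j (pd i f) x) (pd i f x) / inner (pd i f x) (pd i f x)"
    by (subst pd_inner[OF f1_diff[OF x] f1_diff[OF x]]) (simp add: inner_commute field_simps)
  finally show ?thesis .
qed

lemma aa_inner: "x \<in> U \<Longrightarrow> inner (pd j (pd i f) x) (pd i f x) = aa f i j x * inner (pd i f x) (pd i f x)"
  using aa_eq to_sq_pos by (simp add: field_simps)

definition SS where "SS x k i j = inner (pd k (pd i f) x) (pd j f x)"

lemma SS_sym: "x \<in> U \<Longrightarrow> SS x k i j = SS x i k j"
  unfolding SS_def using pd_sym_smooth[OF U to_smooth] by simp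

lemma SS_anti: "x \<in> U \<Longrightarrow> i \<noteq> j \<Longrightarrow> SS x k i j = - SS x k j i"
proof -
  assume x: "x \<in> U" and ij: "i \<noteq> j"
  have "pd k (\<lambda>y. inner (pd i f y) (pd j f y)) x = pd k (\<lambda>y. 0::real) x"
    by (rule pd_cong[OF U x]) (simp add: to_orth ij)
  then have "inner (pd k (pd i f) x) (pd j f x) + inner (pd i f x) (pd k (pd j f) x) = 0"
    by (simp add: pd_inner[OF f1_diff[OF x] f1_diff[OF x]] pd_const)
  then show ?thesis unfolding SS_def by (simp add: inner_commute eq_neg_iff_add_eq_0)
qed

lemma SS_zero:
  assumes x: "x \<in> U" and d: "i \<noteq> j" "j \<noteq> k" "i \<noteq> k"
  shows "inner (pd j (pd i f) x) (pd k f x) = 0"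
proof -
  have "SS x j i k = - SS x j k i" using SS_anti[OF x, where k=j and i=i and j=k] d by simp
  also have "\<dots> = - SS x k j i" using SS_sym[OF x, where k=j and i=k and j=i] by simp
  also have "\<dots> = SS x k i j" using SS_anti[OF x, where k=k and i=j and j=i] d by simp
  also have "\<dots> = SS x i k j" using SS_sym[OF x, where k=k and i=i and j=j] by simp
  also have "\<dots> = - SS x i j k" using SS_anti[OF x, where k=i and i=k and j=j] d by simp
  also have "\<dots> = - SS x j i k" using SS_sym[OF x, where k=i and i=j and j=k] by simp
  finally have "SS x j i k = 0" by simp
  then show ?thesis unfolding SS_def .
qed

lemma darboux:
  assumes x: "x \<in> U" and ij: "i \<noteq> j"
  shows "pd j (pd i f) x = aa f i j x *\<^sub>R pd i f x + aa f j i x *\<^sub>R pd j f x"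
proof -
  let ?w = "pd j (pd i f) x - (aa f i j x *\<^sub>R pd i f x + aa f j i x *\<^sub>R pd j f x)"
  have "inner ?w (pd m f x) = 0" for m
  proof -
    consider "m = i" | "m = j" | "m \<noteq> i" "m \<noteq> j" by blast
    then show ?thesis
    proof cases
      case 1 then show ?thesis
        using aa_inner[OF x, where i=i and j=j] to_orth[OF x, where i=j and j=i] ij
        by (simp add: inner_diff_left inner_add_left)
    next
      case 2
      have "pd j (pd i f) x = pd i (pd j f) x" using pd_sym_smooth[OF U to_smooth x] .
      then show ?thesis
        using 2 aa_inner[OF x, where i=j and j=i] to_orth[OF x, where i=i and j=j] ij
        by (simp add: inner_diff_left inner_add_left)
    next
      case 3 then show ?thesis
        using SS_zero[OF x, where i=i and j=j and k=m] to_orth[OF x, where i=i and j=m] to_orth[OF x, where i=j and j=m] ij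
        by (simp add: inner_diff_left inner_add_left)
    qed
  qed
  then have "?w = 0" by (rule to_zero[OF x])
  then show ?thesis by simp
qed

lemma lame123:
  assumes x: "x \<in> U"
  shows "pd 3 (aa f 1 2) x = aa f 2 3 x * aa f 1 2 x + aa f 3 2 x * aa f 1 3 x - aa f 1 3 x * aa f 1 2 x"
proof -
  define n where "n = inner (pd 1 f x) (pd 1 f x)"
  have n: "n > 0" unfolding n_def using to_sq_pos[OF x] .
  have A: "pd 3 (pd 1 (pd 2 f)) x = pd 3 (\<lambda>y. aa f 2 1 y *\<^sub>R pd 2 f y + aa f 1 2 y *\<^sub>R pd 1 f y) x"
    by (rule pd_cong[OF U x]) (simp add: darboux)
  also have "\<dots> = (pd 3 (aa f 2 1) x *\<^sub>R pd 2 f x + aa f 2 1 x *\<^sub>R pd 3 (pd 2 f) x)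
                   + (pd 3 (aa f 1 2) x *\<^sub>R pd 1 f x + aa f 1 2 x *\<^sub>R pd 3 (pd 1 f) x)"
    by (simp add: pd_add pd_scaleR differentiable_add differentiable_scaleR aa_diff f1_diff x)
  finally have A': "pd 3 (pd 1 (pd 2 f)) x = \<dots>" .
  have B: "pd 1 (pd 3 (pd 2 f)) x = pd 1 (\<lambda>y. aa f 2 3 y *\<^sub>R pd 2 f y + aa f 3 2 y *\<^sub>R pd 3 f y) x"
    by (rule pd_cong[OF U x]) (simp add: darboux)
  also have "\<dots> = (pd 1 (aa f 2 3) x *\<^sub>R pd 2 f x + aa f 2 3 x *\<^sub>R pd 1 (pd 2 f) x)
                   + (pd 1 (aa f 3 2) x *\<^sub>R pd 3 f x + aa f 3 2 x *\<^sub>R pd 1 (pd 3 f) x)"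
    by (simp add: pd_add pd_scaleR differentiable_add differentiable_scaleR aa_diff f1_diff x)
  finally have B': "pd 1 (pd 3 (pd 2 f)) x = \<dots>" .
  have AB: "pd 3 (pd 1 (pd 2 f)) x = pd 1 (pd 3 (pd 2 f)) x"
    using pd_sym_smooth[OF U f1_smooth x] .
  have o21: "inner (pd 2 f x) (pd 1 f x) = 0" using to_orth[OF x, where i=2 and j=1] by simp
  have o31: "inner (pd 3 f x) (pd 1 f x) = 0" using to_orth[OF x, where i=3 and j=1] by simp
  have z: "inner (pd 3 (pd 2 f) x) (pd 1 f x) = 0" using SS_zero[OF x, where i=2 and j=3 and k=1] by simp
  have i13: "inner (pd 3 (pd 1 f) x) (pd 1 f x) = aa f 1 3 x * n"
    unfolding n_def using aa_inner[OF x, where i=1 and j=3] .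
  have i12: "inner (pd 1 (pd 2 f) x) (pd 1 f x) = aa f 1 2 x * n"
    unfolding n_def using aa_inner[OF x, where i=1 and j=2] pd_sym_smooth[OF U to_smooth x, where i=1 and j=2] by simp
  have i13': "inner (pd 1 (pd 3 f) x) (pd 1 f x) = aa f 1 3 x * n"
    unfolding n_def using aa_inner[OF x, where i=1 and j=3] pd_sym_smooth[OF U to_smooth x, where i=1 and j=3] by simp
  have "inner (pd 3 (pd 1 (pd 2 f)) x) (pd 1 f x) = pd 3 (aa f 1 2) x * n + aa f 1 2 x * (aa f 1 3 x * n)"
    unfolding A' by (simp add: inner_add_left o21 z i13 n_def)
  moreover have "inner (pd 1 (pd 3 (pd 2 f)) x) (pd 1 f x) = aa f 2 3 x * (aa f 1 2 x * n) + aa f 3 2 x * (aa f 1 3 x * n)"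
    unfolding B' by (simp add: inner_add_left o21 o31 i12 i13')
  ultimately have E: "pd 3 (aa f 1 2) x * n + aa f 1 2 x * (aa f 1 3 x * n) = aa f 2 3 x * (aa f 1 2 x * n) + aa f 3 2 x * (aa f 1 3 x * n)"
    using AB by simp
  then have "(pd 3 (aa f 1 2) x - (aa f 2 3 x * aa f 1 2 x + aa f 3 2 x * aa f 1 3 x - aa f 1 3 x * aa f 1 2 x)) * n = 0"
    by (simp add: algebra_simps)
  then show ?thesis using n by simp
qed

lemma lame_pos: "x \<in> U \<Longrightarrow> lame f i x > 0"
  using to_nz by (simp add: lame_def)

lemma LL_diff: "x \<in> U \<Longrightarrow> LL f i differentiable (at x)"
  using smooth_diff[OF U LL_smooth] .

lemma LLprod:
  assumes x: "x \<in> U"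
  shows "pd p (pd q (\<lambda>y. ln (lame f p y * lame f q y))) x = pd p (aa f p q) x + pd p (aa f q q) x"
proof -
  have e1: "pd q (\<lambda>y. ln (lame f p y * lame f q y)) y = aa f p q y + aa f q q y" if y: "y \<in> U" for y
  proof -
    have "pd q (\<lambda>y. ln (lame f p y * lame f q y)) y = pd q (\<lambda>y. LL f p y + LL f q y) y"
      by (rule pd_cong[OF U y]) (simp add: LL_def ln_mult_pos[OF lame_pos lame_pos])
    also have "\<dots> = aa f p q y + aa f q q y"
      by (simp add: pd_add LL_diff y aa_def)
    finally show ?thesis .
  qed
  have "pd p (pd q (\<lambda>y. ln (lame f p y * lame f q y))) x = pd p (\<lambda>y. aa f p q y + aa f q q y) x"
    by (rule pd_cong[OF U x]) (simp add: e1)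
  also have "\<dots> = pd p (aa f p q) x + pd p (aa f q q) x"
    by (simp add: pd_add aa_diff x)
  finally show ?thesis .
qed

lemma aa_sym: "x \<in> U \<Longrightarrow> pd k (aa f i j) x = pd j (aa f i k) x"
  unfolding aa_def using pd_sym_smooth[OF U LL_smooth] by blast

end



lemma pd_lnlame: "pd j (\<lambda>y. ln (lame f k y)) = aa f k j"
  by (simp add: aa_def LL_def)

lemma inverse_differentiable:
  fixes g :: "real^3 \<Rightarrow> real"
  assumes "g differentiable (at x)" "g x \<noteq> 0"
  shows "(\<lambda>y. inverse (g y)) differentiable (at x)"
  using Deriv.has_derivative_inverse[OF assms(2) pd_works[OF assms(1)]] unfolding differentiable_def by blast

lemma comb_facts:
  assumes "\<forall>m. let p = m + 1; q = m + 2; H = lame f in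
           \<forall>x\<in>V. h q x = h p x - \<phi> m x
                \<and> pd p (h p) x = \<phi> m x * pd p (\<lambda>y. ln (H q y)) x + pd p (\<phi> m) x
                \<and> pd q (h p) x = - \<phi> m x * pd q (\<lambda>y. ln (H p y)) x"
    and x: "x \<in> V"
  shows "h (m+2) x = h (m+1) x - \<phi> m x"
    and "pd (m+1) (h (m+1)) x = \<phi> m x * aa f (m+2) (m+1) x + pd (m+1) (\<phi> m) x"
    and "pd (m+2) (h (m+1)) x = - \<phi> m x * aa f (m+1) (m+2) x"
  using assms(1)[rule_format, of m] x by (simp_all add: Let_def pd_lnlame)

lemma num3: "(4::3) = 1" "(5::3) = 2" by simp_all

lemma idx3: "(i::3) + 2 + 1 = i" "(i::3) + 2 + 2 = i + 1" "(i::3) + 1 + 1 = i + 2" "(i::3) + 1 + 2 = i"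
  by simp_all

lemma forward:
  fixes U V :: "(real^3) set" and f fh :: "real^3 \<Rightarrow> real^3" and \<phi> :: "3 \<Rightarrow> real^3 \<Rightarrow> real"
  assumes U: "open U" and TO: "triply_orthogonal U f" and phis: "\<And>m. smooth_on3 U (\<phi> m)"
    and V: "open V" "x0 \<in> V" "V \<subseteq> U"
    and TOh: "triply_orthogonal V fh" and C: "combescure_induced V f \<phi> fh"
  shows "\<phi> 1 x0 + \<phi> 2 x0 + \<phi> 3 x0 = 0"
    and "pd (i+1) (\<phi> (i+1)) x0 = \<phi> i x0 * aa f (i+2) (i+1) x0 + \<phi> (i+2) x0 * aa f i (i+1) x0"
proof -
  obtain h where hfh: "\<And>i x. x \<in> V \<Longrightarrow> pd i fh x = h i x *\<^sub>R pd i f x"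
    and hc: "\<forall>m. let p = m + 1; q = m + 2; H = lame f in
           \<forall>x\<in>V. h q x = h p x - \<phi> m x
                \<and> pd p (h p) x = \<phi> m x * pd p (\<lambda>y. ln (H q y)) x + pd p (\<phi> m) x
                \<and> pd q (h p) x = - \<phi> m x * pd q (\<lambda>y. ln (H p y)) x"
    using C unfolding combescure_induced_def by blast
  note cf = comb_facts[OF hc]
  have xU: "x \<in> U" if "x \<in> V" for x using V that by blast
  have hd: "h i differentiable (at x)" if x: "x \<in> V" for i x
  proof -
    have eq: "h i y = inner (pd i fh y) (pd i f y) * inverse (inner (pd i f y) (pd i f y))" if y: "y \<in> V" for y
    proof -
      have "inner (pd i fh y) (pd i f y) = h i y * inner (pd i f y) (pd i f y)"
        using hfh[OF y] by simp
      then show ?thesis using to_sq_pos[OF U TO xU[OF y], of i] by (simp add: field_simps)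
    qed
    have s: "smooth_on3 V (pd i fh)" using smooth_pd[of V fh i] TOh by (simp add: triply_orthogonal_def)
    have d1: "pd i fh differentiable (at x)" using smooth_diff[OF V(1) s x] .
    have d2: "pd i f differentiable (at x)" using f1_diff[OF U TO xU[OF x]] .
    have dd: "(\<lambda>y. inner (pd i fh y) (pd i f y) * inverse (inner (pd i f y) (pd i f y))) differentiable (at x)"
      by (intro bilinear_differentiable[OF bounded_bilinear_mult] bilinear_differentiable[OF bounded_bilinear_inner]
          inverse_differentiable d1 d2) (use to_sq_pos[OF U TO xU[OF x], of i] in simp)
    show ?thesis by (rule differentiable_cong_open[OF V(1) x _ dd]) (simp add: eq)
  qed
  have phd: "\<phi> m differentiable (at x)" if "x \<in> V" for m x using smooth_diff[OF U phis xU[OF that]] .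
  show "\<phi> 1 x0 + \<phi> 2 x0 + \<phi> 3 x0 = 0"
    using cf(1)[OF V(2), of 1] cf(1)[OF V(2), of 2] cf(1)[OF V(2), of 3] by (simp add: num3)
  have a: "pd (i+1) (\<phi> (i+1)) x0 = pd (i+1) (\<lambda>y. h (i+2) y - h i y) x0"
    by (rule pd_cong[OF V(1,2)]) (use cf(1)[of _ "i+1"] in \<open>simp add: idx3\<close>)
  also have "\<dots> = pd (i+1) (h (i+2)) x0 - pd (i+1) (h i) x0"
    by (rule pd_diff[OF hd hd]) (use V in auto)
  also have "pd (i+1) (h (i+2)) x0 = pd (i+1) (\<lambda>y. h (i+1) y - \<phi> i y) x0"
    by (rule pd_cong[OF V(1,2)]) (use cf(1)[of _ "i"] in simp)
  also have "\<dots> = pd (i+1) (h (i+1)) x0 - pd (i+1) (\<phi> i) x0"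
    by (rule pd_diff[OF hd phd]) (use V in auto)
  also have "pd (i+1) (h (i+1)) x0 = \<phi> i x0 * aa f (i+2) (i+1) x0 + pd (i+1) (\<phi> i) x0"
    using cf(2)[OF V(2), of i] .
  also have "pd (i+1) (h i) x0 = - \<phi> (i+2) x0 * aa f i (i+1) x0"
    using cf(3)[OF V(2), of "i+2"] by (simp add: idx3)
  finally show "pd (i+1) (\<phi> (i+1)) x0 = \<phi> i x0 * aa f (i+2) (i+1) x0 + \<phi> (i+2) x0 * aa f i (i+1) x0"
    by simp
qed



lemma differentiable_mult_at:
  fixes f g :: "real^3 \<Rightarrow> real"
  shows "f differentiable (at x) \<Longrightarrow> g differentiable (at x) \<Longrightarrow> (\<lambda>y. f y * g y) differentiable (at x)"
  using bilinear_differentiable[OF bounded_bilinear_mult] by blast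

lemma differentiable_scaleR_at:
  fixes f :: "real^3 \<Rightarrow> real" and g :: "real^3 \<Rightarrow> 'a::real_normed_vector"
  shows "f differentiable (at x) \<Longrightarrow> g differentiable (at x) \<Longrightarrow> (\<lambda>y. f y *\<^sub>R g y) differentiable (at x)"
  using bilinear_differentiable[OF bounded_bilinear_scaleR] by blast

lemma closedF:
  fixes U :: "(real^3) set" and f :: "real^3 \<Rightarrow> real^3" and \<phi> :: "3 \<Rightarrow> real^3 \<Rightarrow> real"
  assumes U: "open U" and TO: "triply_orthogonal U f" and phis: "\<And>m. smooth_on3 U (\<phi> m)"
    and phieq: "\<And>m. phi_equation U f m (\<phi> m)"
    and S: "\<And>x. x \<in> U \<Longrightarrow> \<phi> 1 x + \<phi> 2 x + \<phi> 3 x = 0"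
    and D: "\<And>i x. x \<in> U \<Longrightarrow> pd (i+1) (\<phi> (i+1)) x = \<phi> i x * aa f (i+2) (i+1) x + \<phi> (i+2) x * aa f i (i+1) x"
    and x: "x \<in> U"
  shows "pd 2 (\<lambda>y. \<phi> 3 y * aa f 2 1 y + pd 1 (\<phi> 3) y) x = pd 1 (\<lambda>y. - \<phi> 3 y * aa f 1 2 y) x"
    and "pd 3 (\<lambda>y. \<phi> 3 y * aa f 2 1 y + pd 1 (\<phi> 3) y) x = pd 1 (\<lambda>y. \<phi> 2 y * aa f 1 3 y) x"
    and "pd 3 (\<lambda>y. - \<phi> 3 y * aa f 1 2 y) x = pd 2 (\<lambda>y. \<phi> 2 y * aa f 1 3 y) x"
proof -
  have phd: "\<phi> m differentiable (at y)" if "y \<in> U" for m y using smooth_diff[OF U phis that] .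
  have ph1d: "pd j (\<phi> m) differentiable (at y)" if "y \<in> U" for j m y
    using smooth_diff[OF U smooth_pd[OF phis] that] .
  have aad: "aa f i j differentiable (at y)" if "y \<in> U" for i j y using aa_diff[OF U TO that] .
  have mphd: "(\<lambda>y. - \<phi> m y) differentiable (at z)" if "z \<in> U" for m z
    using differentiable_minus[OF phd[OF that]] .
  have D1: "pd 1 (\<phi> 1) y = \<phi> 3 y * aa f 2 1 y + \<phi> 2 y * aa f 3 1 y" if "y \<in> U" for y
    using D[OF that, of 3] by (simp add: num3)
  have D2: "pd 2 (\<phi> 2) y = \<phi> 1 y * aa f 3 2 y + \<phi> 3 y * aa f 1 2 y" if "y \<in> U" for y
    using D[OF that, of 1] by (simp add: num3)
  have D3: "pd 3 (\<phi> 3) y = \<phi> 2 y * aa f 1 3 y + \<phi> 1 y * aa f 2 3 y" if "y \<in> U" for y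
    using D[OF that, of 2] by (simp add: num3)
  have symphi: "pd i (pd j (\<phi> m)) x = pd j (pd i (\<phi> m)) x" for i j m
    using pd_sym_smooth[OF U phis x] .
  have pe3: "pd 1 (pd 2 (\<phi> 3)) x + aa f 1 2 x * pd 1 (\<phi> 3) x + aa f 2 1 x * pd 2 (\<phi> 3) x
             + \<phi> 3 x * (pd 1 (aa f 1 2) x + pd 1 (aa f 2 2) x) = 0"
    using bspec[OF phieq[of 3, unfolded phi_equation_def Let_def] x] LLprod[OF U TO x, of 1 2]
    by (simp add: pd_lnlame num3)
  have pe2: "pd 3 (pd 1 (\<phi> 2)) x + aa f 3 1 x * pd 3 (\<phi> 2) x + aa f 1 3 x * pd 1 (\<phi> 2) x
             + \<phi> 2 x * (pd 3 (aa f 3 1) x + pd 3 (aa f 1 1) x) = 0"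
    using bspec[OF phieq[of 2, unfolded phi_equation_def Let_def] x] LLprod[OF U TO x, of 3 1]
    by (simp add: pd_lnlame num3)
  show "pd 2 (\<lambda>y. \<phi> 3 y * aa f 2 1 y + pd 1 (\<phi> 3) y) x = pd 1 (\<lambda>y. - \<phi> 3 y * aa f 1 2 y) x"
  proof -
    have l: "pd 2 (\<lambda>y. \<phi> 3 y * aa f 2 1 y + pd 1 (\<phi> 3) y) x
        = pd 2 (\<phi> 3) x * aa f 2 1 x + \<phi> 3 x * pd 2 (aa f 2 1) x + pd 2 (pd 1 (\<phi> 3)) x"
      by (simp add: pd_add pd_mult differentiable_mult_at phd ph1d aad x)
    have r: "pd 1 (\<lambda>y. - \<phi> 3 y * aa f 1 2 y) x = - pd 1 (\<phi> 3) x * aa f 1 2 x - \<phi> 3 x * pd 1 (aa f 1 2) x"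
      by (simp add: pd_mult pd_minus mphd phd aad x)
    have s1: "pd 2 (aa f 2 1) x = pd 1 (aa f 2 2) x" using aa_sym[OF U TO x] by blast
    show ?thesis unfolding l r s1 using pe3 symphi[of 2 1 3] by (simp add: algebra_simps)
  qed
  show "pd 3 (\<lambda>y. \<phi> 3 y * aa f 2 1 y + pd 1 (\<phi> 3) y) x = pd 1 (\<lambda>y. \<phi> 2 y * aa f 1 3 y) x"
  proof -
    have l: "pd 3 (\<lambda>y. \<phi> 3 y * aa f 2 1 y + pd 1 (\<phi> 3) y) x
        = pd 3 (\<phi> 3) x * aa f 2 1 x + \<phi> 3 x * pd 3 (aa f 2 1) x + pd 3 (pd 1 (\<phi> 3)) x"
      by (simp add: pd_add pd_mult differentiable_mult_at phd ph1d aad x)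
    have e: "pd 1 (\<phi> 3) y = - (\<phi> 3 y * aa f 2 1 y + \<phi> 2 y * aa f 3 1 y) - pd 1 (\<phi> 2) y" if y: "y \<in> U" for y
    proof -
      have "pd 1 (\<phi> 3) y = pd 1 (\<lambda>z. - \<phi> 1 z - \<phi> 2 z) y"
        by (rule pd_cong[OF U y]) (use S in \<open>simp add: eq_neg_iff_add_eq_0 algebra_simps\<close>)
      also have "\<dots> = - pd 1 (\<phi> 1) y - pd 1 (\<phi> 2) y"
        by (simp add: pd_diff pd_minus mphd phd y)
      finally show ?thesis using D1[OF y] by simp
    qed
    have "pd 3 (pd 1 (\<phi> 3)) x = pd 3 (\<lambda>y. - (\<phi> 3 y * aa f 2 1 y + \<phi> 2 y * aa f 3 1 y) - pd 1 (\<phi> 2) y) x"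
      by (rule pd_cong[OF U x]) (simp add: e)
    also have "\<dots> = - (pd 3 (\<phi> 3) x * aa f 2 1 x + \<phi> 3 x * pd 3 (aa f 2 1) x
                      + (pd 3 (\<phi> 2) x * aa f 3 1 x + \<phi> 2 x * pd 3 (aa f 3 1) x)) - pd 3 (pd 1 (\<phi> 2)) x"
      by (simp add: pd_add pd_diff pd_minus pd_mult differentiable_mult_at phd ph1d aad x)
    finally have m: "pd 3 (pd 1 (\<phi> 3)) x = \<dots>" .
    have r: "pd 1 (\<lambda>y. \<phi> 2 y * aa f 1 3 y) x = pd 1 (\<phi> 2) x * aa f 1 3 x + \<phi> 2 x * pd 1 (aa f 1 3) x"
      by (simp add: pd_mult phd aad x)
    have s1: "pd 1 (aa f 1 3) x = pd 3 (aa f 1 1) x" using aa_sym[OF U TO x] by blast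
    show ?thesis unfolding l r m s1 using pe2 by (simp add: algebra_simps)
  qed
  show "pd 3 (\<lambda>y. - \<phi> 3 y * aa f 1 2 y) x = pd 2 (\<lambda>y. \<phi> 2 y * aa f 1 3 y) x"
  proof -
    have l: "pd 3 (\<lambda>y. - \<phi> 3 y * aa f 1 2 y) x = - pd 3 (\<phi> 3) x * aa f 1 2 x - \<phi> 3 x * pd 3 (aa f 1 2) x"
      by (simp add: pd_mult pd_minus mphd phd aad x)
    have r: "pd 2 (\<lambda>y. \<phi> 2 y * aa f 1 3 y) x = pd 2 (\<phi> 2) x * aa f 1 3 x + \<phi> 2 x * pd 2 (aa f 1 3) x"
      by (simp add: pd_mult phd aad x)
    have s1: "pd 2 (aa f 1 3) x = pd 3 (aa f 1 2) x" using aa_sym[OF U TO x] by blast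
    have s: "\<phi> 1 x = - \<phi> 2 x - \<phi> 3 x" using S[OF x] by (simp add: algebra_simps)
    show ?thesis unfolding l r s1 D2[OF x] D3[OF x] lame123[OF U TO x] s by (simp add: algebra_simps)
  qed
qed

lemma smooth_subsetU: "open V \<Longrightarrow> V \<subseteq> U \<Longrightarrow> smooth_on3 U g \<Longrightarrow> smooth_on3 V g"
  by (rule smooth_subset)

lemma backward:
  fixes U :: "(real^3) set" and f :: "real^3 \<Rightarrow> real^3" and \<phi> :: "3 \<Rightarrow> real^3 \<Rightarrow> real"
  assumes U: "open U" and TO: "triply_orthogonal U f" and phis: "\<And>m. smooth_on3 U (\<phi> m)"
    and phieq: "\<And>m. phi_equation U f m (\<phi> m)"
    and S: "\<And>x. x \<in> U \<Longrightarrow> \<phi> 1 x + \<phi> 2 x + \<phi> 3 x = 0"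
    and D: "\<And>i x. x \<in> U \<Longrightarrow> pd (i+1) (\<phi> (i+1)) x = \<phi> i x * aa f (i+2) (i+1) x + \<phi> (i+2) x * aa f i (i+1) x"
    and x0: "x0 \<in> U"
  shows "\<exists>V. open V \<and> x0 \<in> V \<and> V \<subseteq> U \<and> (\<exists>fh. triply_orthogonal V fh \<and> combescure_induced V f \<phi> fh)"
proof -
  have phd: "\<phi> m differentiable (at y)" if "y \<in> U" for m y using smooth_diff[OF U phis that] .
  have ph1d: "pd j (\<phi> m) differentiable (at y)" if "y \<in> U" for j m y
    using smooth_diff[OF U smooth_pd[OF phis] that] .
  have aad: "aa f i j differentiable (at y)" if "y \<in> U" for i j y using aa_diff[OF U TO that] .
  have D1: "pd 1 (\<phi> 1) y = \<phi> 3 y * aa f 2 1 y + \<phi> 2 y * aa f 3 1 y" if "y \<in> U" for y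
    using D[OF that, of 3] by (simp add: num3)
  have D2: "pd 2 (\<phi> 2) y = \<phi> 1 y * aa f 3 2 y + \<phi> 3 y * aa f 1 2 y" if "y \<in> U" for y
    using D[OF that, of 1] by (simp add: num3)
  have D3: "pd 3 (\<phi> 3) y = \<phi> 2 y * aa f 1 3 y + \<phi> 1 y * aa f 2 3 y" if "y \<in> U" for y
    using D[OF that, of 2] by (simp add: num3)
  have dS: "pd j (\<phi> 1) y + pd j (\<phi> 2) y + pd j (\<phi> 3) y = 0" if y: "y \<in> U" for j y
  proof -
    have "pd j (\<lambda>z. \<phi> 1 z + \<phi> 2 z + \<phi> 3 z) y = pd j (\<lambda>z. 0::real) y"
      by (rule pd_cong[OF U y]) (simp add: S)
    then show ?thesis by (simp add: pd_add pd_const phd y differentiable_add)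
  qed
  define F1 where "F1 = (\<lambda>y. \<phi> 3 y * aa f 2 1 y + pd 1 (\<phi> 3) y)"
  define F2 where "F2 = (\<lambda>y. - \<phi> 3 y * aa f 1 2 y)"
  define F3 where "F3 = (\<lambda>y. \<phi> 2 y * aa f 1 3 y)"
  define F where "F i = (if i = 1 then F1 else if i = 2 then F2 else F3)" for i :: 3
  have F123: "F 1 = F1" "F 2 = F2" "F 3 = F3" by (simp_all add: F_def)
  have Fs: "smooth_on3 U (F i)" for i
  proof -
    have "smooth_on3 U F1" unfolding F1_def
      by (intro smooth_add[OF U] smooth_mult[OF U] phis aa_smooth[OF U TO] smooth_pd)
    moreover have "smooth_on3 U F2" unfolding F2_def
      by (intro smooth_mult[OF U] smooth_minus[OF U] phis aa_smooth[OF U TO])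
    moreover have "smooth_on3 U F3" unfolding F3_def
      by (intro smooth_mult[OF U] phis aa_smooth[OF U TO])
    ultimately show ?thesis using exhaust_3[of i] F123 by auto
  qed
  have clF: "pd j (F i) y = pd i (F j) y" if y: "y \<in> U" for i j y
  proof -
    note c = closedF[OF U TO phis phieq S D y, folded F1_def F2_def F3_def]
    show ?thesis using exhaust_3[of i] exhaust_3[of j] c F123 by auto
  qed
  obtain r where r: "r > 0" "ball x0 r \<subseteq> U" using U x0 open_contains_ball by blast
  have "\<exists>G. \<forall>x\<in>ball x0 r. (G has_derivative (\<lambda>v. \<Sum>i\<in>UNIV. v $ i *\<^sub>R F i x)) (at x)"
  proof (rule poincare[OF r(1)])
    show "\<And>i y. y \<in> ball x0 r \<Longrightarrow> F i differentiable (at y)" using smooth_diff[OF U Fs] r by blast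
    show "\<And>i. continuous_on (ball x0 r) (F i)" using smooth_cont[OF Fs] continuous_on_subset r by blast
    show "\<And>i j. continuous_on (ball x0 r) (pd j (F i))"
      using smooth_cont[OF smooth_pd[OF Fs]] continuous_on_subset r by blast
    show "\<And>i j y. y \<in> ball x0 r \<Longrightarrow> pd j (F i) y = pd i (F j) y" using clF r by blast
  qed
  then obtain g where gder: "\<And>x. x \<in> ball x0 r \<Longrightarrow> (g has_derivative (\<lambda>v. \<Sum>i\<in>UNIV. v $ i *\<^sub>R F i x)) (at x)"
    by blast
  have pdg: "pd j g x = F j x" if "x \<in> ball x0 r" for j x
  proof -
    have "pd j g x = (\<lambda>v. \<Sum>i\<in>UNIV. v $ i *\<^sub>R F i x) (axis j 1)" by (rule pd_has[OF gder[OF that]])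
    also have "\<dots> = F j x" by (simp only: pd_axis_sum)
    finally show ?thesis .
  qed
  have gd: "g differentiable (at x)" if "x \<in> ball x0 r" for x
    using gder[OF that] unfolding differentiable_def by blast
  have gs: "smooth_on3 (ball x0 r) g"
  proof (rule smooth_intro[OF open_ball gd])
    fix j
    have "smooth_on3 (ball x0 r) (F j)" using smooth_subset[OF open_ball r(2) Fs] .
    then show "smooth_on3 (ball x0 r) (pd j g)"
      by (rule smooth_cong[OF open_ball]) (simp add: pdg)
  qed
  define c where "c = 1 + \<bar>g x0\<bar> + \<bar>\<phi> 3 x0\<bar> + \<bar>\<phi> 2 x0\<bar>"
  define h where "h i y = (if i = 1 then g y + c else if i = 2 then g y + c - \<phi> 3 y else g y + c + \<phi> 2 y)"
    for i :: 3 and y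
  have h123: "h 1 = (\<lambda>y. g y + c)" "h 2 = (\<lambda>y. g y + c - \<phi> 3 y)" "h 3 = (\<lambda>y. g y + c + \<phi> 2 y)"
    by (simp_all add: h_def fun_eq_iff)
  have hv: "h 1 y = g y + c" "h 2 y = g y + c - \<phi> 3 y" "h 3 y = g y + c + \<phi> 2 y" for y
    by (simp_all add: h_def)
  have hx0: "h i x0 \<noteq> 0" for i
  proof -
    have "h 1 x0 > 0" "h 2 x0 > 0" "h 3 x0 > 0" unfolding h123 c_def by auto
    then show ?thesis using exhaust_3[of i] by fastforce
  qed
  have hsr: "smooth_on3 (ball x0 r) (h i)" for i
  proof -
    have ps: "smooth_on3 (ball x0 r) (\<phi> m)" for m using smooth_subset[OF open_ball r(2) phis] .
    have "smooth_on3 (ball x0 r) (h 1)" unfolding h123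
      by (intro smooth_add[OF open_ball] gs smooth_const[OF open_ball])
    moreover have "smooth_on3 (ball x0 r) (h 2)" unfolding h123
      by (intro smooth_diff_fun[OF open_ball] smooth_add[OF open_ball] gs smooth_const[OF open_ball] ps)
    moreover have "smooth_on3 (ball x0 r) (h 3)" unfolding h123
      by (intro smooth_add[OF open_ball] gs smooth_const[OF open_ball] ps)
    ultimately show ?thesis using exhaust_3[of i] by fastforce
  qed
  have "\<exists>e>0. \<forall>y. dist x0 y < e \<longrightarrow> h i y \<noteq> 0" for i
  proof -
    have "h i differentiable (at x0)" using smooth_diff[OF open_ball hsr] r by simp
    then have c: "continuous (at x0) (h i)" by (rule differentiable_imp_continuous_within)
    show ?thesis using continuous_at_avoid[OF c hx0[of i]] .
  qed
  then obtain e where e: "\<And>i. e i > 0" "\<And>i y. dist x0 y < e i \<Longrightarrow> h i y \<noteq> 0" by metis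
  define \<rho> where "\<rho> = min r (min (e 1) (min (e 2) (e 3)))"
  define V where "V = ball x0 \<rho>"
  have \<rho>: "\<rho> > 0" using r e by (simp add: \<rho>_def)
  have V: "open V" "x0 \<in> V" "V \<subseteq> ball x0 r" "V \<subseteq> U" using \<rho> r by (auto simp: V_def \<rho>_def)
  have hnz: "h i y \<noteq> 0" if "y \<in> V" for i y
  proof -
    have "dist x0 y < e i" using that exhaust_3[of i] by (auto simp: V_def \<rho>_def)
    then show ?thesis using e by blast
  qed
  have VU: "y \<in> U" if "y \<in> V" for y using V that by blast
  have Vr: "y \<in> ball x0 r" if "y \<in> V" for y using V that by blast
  have hs: "smooth_on3 V (h i)" for i using smooth_subset[OF V(1) V(3) hsr] .
  have hd: "h i differentiable (at y)" if "y \<in> V" for i y using smooth_diff[OF V(1) hs that] .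
  have gdV: "g differentiable (at y)" if "y \<in> V" for y using gd Vr that by blast
  have ph1: "pd j (h 1) y = F j y" if y: "y \<in> V" for j y
    unfolding h123 using pd_add[OF gdV[OF y] differentiable_const, of j] pdg[OF Vr[OF y]]
    by (simp add: pd_const)
  have ph2: "pd j (h 2) y = F j y - pd j (\<phi> 3) y" if y: "y \<in> V" for j y
    unfolding h123 using pd_diff[OF differentiable_add[OF gdV[OF y] differentiable_const] phd[OF VU[OF y]], of j]
      pd_add[OF gdV[OF y] differentiable_const, of j] pdg[OF Vr[OF y]]
    by (simp add: pd_const)
  have ph3: "pd j (h 3) y = F j y + pd j (\<phi> 2) y" if y: "y \<in> V" for j y
    unfolding h123 using pd_add[OF differentiable_add[OF gdV[OF y] differentiable_const] phd[OF VU[OF y]], of j]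
      pd_add[OF gdV[OF y] differentiable_const, of j] pdg[OF Vr[OF y]]
    by (simp add: pd_const)
  have hder: "pd j (h i) y = (h j y - h i y) * aa f i j y" if y: "y \<in> V" and ij: "i \<noteq> j" for i j y
  proof -
    have yU: "y \<in> U" using VU[OF y] .
    have s: "\<phi> 1 y = - \<phi> 2 y - \<phi> 3 y" using S[OF yU] by (simp add: algebra_simps)
    have e12: "pd 2 (h 1) y = (h 2 y - h 1 y) * aa f 1 2 y"
      using ph1[OF y] by (simp add: F123 F2_def hv)
    have e13: "pd 3 (h 1) y = (h 3 y - h 1 y) * aa f 1 3 y"
      using ph1[OF y] by (simp add: F123 F3_def hv)
    have e21: "pd 1 (h 2) y = (h 1 y - h 2 y) * aa f 2 1 y"
      using ph2[OF y] by (simp add: F123 F1_def hv)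
    have e23: "pd 3 (h 2) y = (h 3 y - h 2 y) * aa f 2 3 y"
      using ph2[OF y, of 3] D3[OF yU] s by (simp add: F123 F3_def hv algebra_simps)
    have e31: "pd 1 (h 3) y = (h 1 y - h 3 y) * aa f 3 1 y"
    proof -
      have "pd 1 (\<phi> 3) y + pd 1 (\<phi> 2) y = - pd 1 (\<phi> 1) y" using dS[OF yU, of 1] by (simp add: algebra_simps)
      then show ?thesis using ph3[OF y, of 1] D1[OF yU] by (simp add: F123 F1_def hv algebra_simps)
    qed
    have e32: "pd 2 (h 3) y = (h 2 y - h 3 y) * aa f 3 2 y"
      using ph3[OF y, of 2] D2[OF yU] s by (simp add: F123 F2_def hv algebra_simps)
    show ?thesis using exhaust_3[of i] exhaust_3[of j] ij e12 e13 e21 e23 e31 e32 by auto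
  qed
  define \<omega> where "\<omega> i y = h i y *\<^sub>R pd i f y" for i y
  have f1d: "pd i f differentiable (at y)" if "y \<in> U" for i y using f1_diff[OF U TO that] .
  have om_d: "pd j (\<omega> i) y = (h j y * aa f i j y) *\<^sub>R pd i f y + (h i y * aa f j i y) *\<^sub>R pd j f y"
    if y: "y \<in> V" and ij: "i \<noteq> j" for i j y
  proof -
    have "pd j (\<omega> i) y = pd j (h i) y *\<^sub>R pd i f y + h i y *\<^sub>R pd j (pd i f) y"
      unfolding \<omega>_def by (rule pd_scaleR[OF hd[OF y] f1d[OF VU[OF y]]])
    also have "\<dots> = ((h j y - h i y) * aa f i j y) *\<^sub>R pd i f y
                     + h i y *\<^sub>R (aa f i j y *\<^sub>R pd i f y + aa f j i y *\<^sub>R pd j f y)"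
      using hder[OF y ij] darboux[OF U TO VU[OF y] ij] by simp
    also have "\<dots> = (h j y * aa f i j y) *\<^sub>R pd i f y + (h i y * aa f j i y) *\<^sub>R pd j f y"
      by (simp add: algebra_simps scaleR_add_right)
    finally show ?thesis .
  qed
  have oms: "smooth_on3 V (\<omega> i)" for i
    unfolding \<omega>_def using smooth_scaleR[OF V(1) hs smooth_subset[OF V(1) V(4) f1_smooth[OF U TO]]] .
  have "\<exists>G. \<forall>x\<in>ball x0 \<rho>. (G has_derivative (\<lambda>v. \<Sum>i\<in>UNIV. v $ i *\<^sub>R \<omega> i x)) (at x)"
  proof (rule poincare[OF \<rho>])
    show "\<And>i y. y \<in> ball x0 \<rho> \<Longrightarrow> \<omega> i differentiable (at y)" using smooth_diff[OF V(1) oms] V_def by blast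
    show "\<And>i. continuous_on (ball x0 \<rho>) (\<omega> i)" using smooth_cont[OF oms] V_def by blast
    show "\<And>i j. continuous_on (ball x0 \<rho>) (pd j (\<omega> i))"
      using smooth_cont[OF smooth_pd[OF oms]] V_def by blast
    fix i j y assume y: "y \<in> ball x0 \<rho>"
    show "pd j (\<omega> i) y = pd i (\<omega> j) y"
    proof (cases "i = j")
      case True then show ?thesis by simp
    next
      case False
      then show ?thesis using om_d[of y i j] om_d[of y j i] y by (simp add: V_def add.commute)
    qed
  qed
  then obtain fh where fder: "\<And>x. x \<in> V \<Longrightarrow> (fh has_derivative (\<lambda>v. \<Sum>i\<in>UNIV. v $ i *\<^sub>R \<omega> i x)) (at x)"
    unfolding V_def by blast
  have pfh: "pd j fh x = \<omega> j x" if "x \<in> V" for j x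
  proof -
    have "pd j fh x = (\<lambda>v. \<Sum>i\<in>UNIV. v $ i *\<^sub>R \<omega> i x) (axis j 1)" by (rule pd_has[OF fder[OF that]])
    also have "\<dots> = \<omega> j x" by (simp only: pd_axis_sum)
    finally show ?thesis .
  qed
  have fhd: "fh differentiable (at x)" if "x \<in> V" for x
    using fder[OF that] unfolding differentiable_def by blast
  have TOV: "triply_orthogonal V fh"
    unfolding triply_orthogonal_def
  proof (intro conjI ballI allI impI)
    show "smooth_on3 V fh"
    proof (rule smooth_intro[OF V(1) fhd])
      fix j show "smooth_on3 V (pd j fh)" by (rule smooth_cong[OF V(1) oms]) (simp add: pfh)
    qed
  next
    fix x assume x: "x \<in> V"
    have "(\<chi> i. pd i fh x) = (\<chi> i. h i x *s pd i f x)"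
      by (simp add: vec_eq_iff pfh[OF x] \<omega>_def scalar_mult_eq_scaleR)
    then have "det (\<chi> i. pd i fh x) = prod (\<lambda>i. h i x) UNIV * det (\<chi> i. pd i f x)"
      by (simp add: det_rows_mul)
    moreover have "prod (\<lambda>i. h i x) UNIV \<noteq> 0" using hnz[OF x] by (simp add: prod_zero_iff)
    moreover have "det (\<chi> i. pd i f x) \<noteq> 0" using to_det[OF U TO VU[OF x]] .
    ultimately show "det (\<chi> i. pd i fh x) \<noteq> 0" by simp
  next
    fix x and i j :: 3 assume x: "x \<in> V" and ij: "i \<noteq> j"
    show "inner (pd i fh x) (pd j fh x) = 0"
      using to_orth[OF U TO VU[OF x] ij] by (simp add: pfh[OF x] \<omega>_def)
  qed
  have CI: "combescure_induced V f \<phi> fh"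
    unfolding combescure_induced_def
  proof (intro exI[of _ h] conjI allI ballI)
    fix i :: 3 and x assume "x \<in> V" then show "pd i fh x = h i x *\<^sub>R pd i f x" by (simp add: pfh \<omega>_def)
  next
    fix m :: 3
    have m1: "h 3 x = h 2 x - \<phi> 1 x \<and> pd 2 (h 2) x = \<phi> 1 x * aa f 3 2 x + pd 2 (\<phi> 1) x
              \<and> pd 3 (h 2) x = - \<phi> 1 x * aa f 2 3 x" if x: "x \<in> V" for x
    proof (intro conjI)
      have xU: "x \<in> U" using VU[OF x] .
      have s: "\<phi> 1 x = - \<phi> 2 x - \<phi> 3 x" using S[OF xU] by (simp add: algebra_simps)
      show "h 3 x = h 2 x - \<phi> 1 x" using s by (simp add: hv)
      show "pd 2 (h 2) x = \<phi> 1 x * aa f 3 2 x + pd 2 (\<phi> 1) x"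
        using ph2[OF x, of 2] dS[OF xU, of 2] D2[OF xU] by (simp add: F123 F2_def algebra_simps)
      show "pd 3 (h 2) x = - \<phi> 1 x * aa f 2 3 x"
        using hder[OF x, of 2 3] by (simp add: hv s algebra_simps)
    qed
    have m2: "h 1 x = h 3 x - \<phi> 2 x \<and> pd 3 (h 3) x = \<phi> 2 x * aa f 1 3 x + pd 3 (\<phi> 2) x
              \<and> pd 1 (h 3) x = - \<phi> 2 x * aa f 3 1 x" if x: "x \<in> V" for x
    proof (intro conjI)
      show "h 1 x = h 3 x - \<phi> 2 x" by (simp add: hv)
      show "pd 3 (h 3) x = \<phi> 2 x * aa f 1 3 x + pd 3 (\<phi> 2) x"
        using ph3[OF x, of 3] by (simp add: F123 F3_def)
      show "pd 1 (h 3) x = - \<phi> 2 x * aa f 3 1 x"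
        using hder[OF x, of 3 1] by (simp add: hv algebra_simps)
    qed
    have m3: "h 2 x = h 1 x - \<phi> 3 x \<and> pd 1 (h 1) x = \<phi> 3 x * aa f 2 1 x + pd 1 (\<phi> 3) x
              \<and> pd 2 (h 1) x = - \<phi> 3 x * aa f 1 2 x" if x: "x \<in> V" for x
    proof (intro conjI)
      show "h 2 x = h 1 x - \<phi> 3 x" by (simp add: hv)
      show "pd 1 (h 1) x = \<phi> 3 x * aa f 2 1 x + pd 1 (\<phi> 3) x"
        using ph1[OF x, of 1] by (simp add: F123 F1_def)
      show "pd 2 (h 1) x = - \<phi> 3 x * aa f 1 2 x"
        using hder[OF x, of 1 2] by (simp add: hv algebra_simps)
    qed
    show "let p = m + 1; q = m + 2; H = lame f in
           \<forall>x\<in>V. h q x = h p x - \<phi> m x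
                \<and> pd p (h p) x = \<phi> m x * pd p (\<lambda>y. ln (H q y)) x + pd p (\<phi> m) x
                \<and> pd q (h p) x = - \<phi> m x * pd q (\<lambda>y. ln (H p y)) x"
      using exhaust_3[of m] m1 m2 m3 by (auto simp: Let_def pd_lnlame num3)
  qed
  show ?thesis using V(1,2,4) TOV CI by blast
qed



theorem proposition2p4:
  fixes U :: "(real^3) set" and f :: "real^3 \<Rightarrow> real^3" and \<phi> :: "3 \<Rightarrow> real^3 \<Rightarrow> real"
  assumes "open U" and "connected U"
    and "triply_orthogonal U f"
    and "\<And>m. smooth_on3 U (\<phi> m)"
    and "\<And>m. phi_equation U f m (\<phi> m)"
  shows "(\<forall>x0\<in>U. \<exists>V. open V \<and> x0 \<in> V \<and> V \<subseteq> U \<and>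
            (\<exists>fh. triply_orthogonal V fh \<and> combescure_induced V f \<phi> fh))
         \<longleftrightarrow>
         ((\<forall>x\<in>U. \<phi> 1 x + \<phi> 2 x + \<phi> 3 x = 0) \<and>
          (\<forall>i. let j = i + 1; k = i + 2; H = lame f in
             \<forall>x\<in>U. pd j (\<phi> j) x = \<phi> i x * pd j (\<lambda>y. ln (H k y)) x
                                 + \<phi> k x * pd j (\<lambda>y. ln (H i y)) x))"
proof
  assume L: "\<forall>x0\<in>U. \<exists>V. open V \<and> x0 \<in> V \<and> V \<subseteq> U \<and>
            (\<exists>fh. triply_orthogonal V fh \<and> combescure_induced V f \<phi> fh)"
  have FW: "\<phi> 1 x + \<phi> 2 x + \<phi> 3 x = 0 \<and>
      (\<forall>i. pd (i+1) (\<phi> (i+1)) x = \<phi> i x * aa f (i+2) (i+1) x + \<phi> (i+2) x * aa f i (i+1) x)"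
    if x: "x \<in> U" for x
  proof -
    obtain V fh where V: "open V" "x \<in> V" "V \<subseteq> U" "triply_orthogonal V fh" "combescure_induced V f \<phi> fh"
      using L x by blast
    show ?thesis using forward[OF assms(1,3,4) V] by blast
  qed
  show "(\<forall>x\<in>U. \<phi> 1 x + \<phi> 2 x + \<phi> 3 x = 0) \<and>
          (\<forall>i. let j = i + 1; k = i + 2; H = lame f in
             \<forall>x\<in>U. pd j (\<phi> j) x = \<phi> i x * pd j (\<lambda>y. ln (H k y)) x
                                 + \<phi> k x * pd j (\<lambda>y. ln (H i y)) x)"
    using FW by (simp add: Let_def pd_lnlame)
next
  assume R: "(\<forall>x\<in>U. \<phi> 1 x + \<phi> 2 x + \<phi> 3 x = 0) \<and>
          (\<forall>i. let j = i + 1; k = i + 2; H = lame f in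
             \<forall>x\<in>U. pd j (\<phi> j) x = \<phi> i x * pd j (\<lambda>y. ln (H k y)) x
                                 + \<phi> k x * pd j (\<lambda>y. ln (H i y)) x)"
  have S: "\<And>x. x \<in> U \<Longrightarrow> \<phi> 1 x + \<phi> 2 x + \<phi> 3 x = 0" using R by blast
  have D: "\<And>i x. x \<in> U \<Longrightarrow> pd (i+1) (\<phi> (i+1)) x = \<phi> i x * aa f (i+2) (i+1) x + \<phi> (i+2) x * aa f i (i+1) x"
    using R by (simp add: Let_def pd_lnlame)
  show "\<forall>x0\<in>U. \<exists>V. open V \<and> x0 \<in> V \<and> V \<subseteq> U \<and>
            (\<exists>fh. triply_orthogonal V fh \<and> combescure_induced V f \<phi> fh)"
    using backward[OF assms(1,3,4,5) S D] by blast
qed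

end
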